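(* Fix $\gamma\neq0$. Consider the subclass of equations $i\psi_t+\psi_{xx}+|\psi|^\gamma\psi+V\psi=0$ whose potentials depend only on $t$, i.e. $V=V(t)$ is an arbitrary smooth complex-valued function of $t$. The intersection of the maximal Lie invariance algebras of all equations in this subclass is $\langle M,\ G(1),\ G(t)\rangle$. Explicitly, this is $\langle M,\ \partial_x,\ t\partial_x+\tfrac12 xM\rangle$.
   Context: $M=i(\psi\partial_\psi-\psi^*\partial_{\psi^*})$ and $G(\chi)=\chi\partial_x+\tfrac12\chi_t xM$. Lie symmetries are vector fields on the space of $(t,x,\psi,\psi^* )$, with $\psi^*$ treated as an independent variable. *)

theory Defs
  imports "HOL-Analysis.Analysis"
begin

text \<open>C-infinity smoothness on an (open) set: Frechet differentiable at every point of S,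
  and every directional derivative is again smooth (coinductively).\<close>
coinductive smooth_on :: "'a::real_normed_vector set \<Rightarrow> ('a \<Rightarrow> 'b::real_normed_vector) \<Rightarrow> bool" where
  "(\<forall>z\<in>S. f differentiable (at z)) \<Longrightarrow>
   (\<forall>v. smooth_on S (\<lambda>z. frechet_derivative f (at z) v)) \<Longrightarrow> smooth_on S f"

text \<open>Space of (t,x,psi); psi complex (psi* = conjugate, i.e. a vector field
  tau d_t + xi d_x + eta d_psi + conj eta d_psi* is encoded as (tau, xi, eta)).
  Domain psi \<noteq> 0, where |psi|^gamma is smooth.\<close>
definition D :: "(real \<times> real \<times> complex) set" where
  "D = {(t, x, u). u \<noteq> 0}"

type_synonym vfield = "real \<times> real \<times> complex \<Rightarrow> real \<times> real \<times> complex"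

definition vt :: "vfield \<Rightarrow> real \<times> real \<times> complex \<Rightarrow> real" where "vt Q z = fst (Q z)"
definition vx :: "vfield \<Rightarrow> real \<times> real \<times> complex \<Rightarrow> real" where "vx Q z = fst (snd (Q z))"
definition vu :: "vfield \<Rightarrow> real \<times> real \<times> complex \<Rightarrow> complex" where "vu Q z = snd (snd (Q z))"

definition pdt :: "(real \<times> real \<Rightarrow> 'b::real_normed_vector) \<Rightarrow> real \<times> real \<Rightarrow> 'b" where
  "pdt f p = frechet_derivative f (at p) (1, 0)"
definition pdx :: "(real \<times> real \<Rightarrow> 'b::real_normed_vector) \<Rightarrow> real \<times> real \<Rightarrow> 'b" where
  "pdx f p = frechet_derivative f (at p) (0, 1)"

definition pt :: "(real \<times> real \<Rightarrow> complex) \<Rightarrow> real \<times> real \<Rightarrow> real \<times> real \<times> complex" where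
  "pt u p = (fst p, snd p, u p)"

definition charQ :: "vfield \<Rightarrow> (real \<times> real \<Rightarrow> complex) \<Rightarrow> real \<times> real \<Rightarrow> complex" where
  "charQ Q u p = vu Q (pt u p) - of_real (vt Q (pt u p)) * pdt u p - of_real (vx Q (pt u p)) * pdx u p"

text \<open>Prolongation coefficients eta^t and eta^xx (standard formula
  eta^J = D_J(characteristic) + tau psi_{J t} + xi psi_{J x}).\<close>
definition eta_t :: "vfield \<Rightarrow> (real \<times> real \<Rightarrow> complex) \<Rightarrow> real \<times> real \<Rightarrow> complex" where
  "eta_t Q u p = pdt (charQ Q u) p + of_real (vt Q (pt u p)) * pdt (pdt u) p
                 + of_real (vx Q (pt u p)) * pdx (pdt u) p"

definition eta_xx :: "vfield \<Rightarrow> (real \<times> real \<Rightarrow> complex) \<Rightarrow> real \<times> real \<Rightarrow> complex" where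
  "eta_xx Q u p = pdx (pdx (charQ Q u)) p + of_real (vt Q (pt u p)) * pdt (pdx (pdx u)) p
                 + of_real (vx Q (pt u p)) * pdx (pdx (pdx u)) p"

definition NLS :: "real \<Rightarrow> (real \<Rightarrow> complex) \<Rightarrow> real \<times> real \<times> complex \<times> complex \<times> complex \<Rightarrow> complex" where
  "NLS \<gamma> V = (\<lambda>(t, x, u, ut, uxx). \<i> * ut + uxx + of_real (cmod u powr \<gamma>) * u + V t * u)"

definition jet :: "(real \<times> real \<Rightarrow> complex) \<Rightarrow> real \<times> real \<Rightarrow> real \<times> real \<times> complex \<times> complex \<times> complex" where
  "jet u p = (fst p, snd p, u p, pdt u p, pdx (pdx u) p)"

definition prQ :: "vfield \<Rightarrow> (real \<times> real \<Rightarrow> complex) \<Rightarrow> real \<times> real \<Rightarrow> real \<times> real \<times> complex \<times> complex \<times> complex" where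
  "prQ Q u p = (vt Q (pt u p), vx Q (pt u p), vu Q (pt u p), eta_t Q u p, eta_xx Q u p)"

text \<open>Infinitesimal invariance criterion Q^(2) Delta = 0 on Delta = 0; jet points are
  represented by values of smooth functions u (every 2-jet is realised).\<close>
definition lie_sym :: "real \<Rightarrow> (real \<Rightarrow> complex) \<Rightarrow> vfield \<Rightarrow> bool" where
  "lie_sym \<gamma> V Q \<longleftrightarrow> smooth_on D Q \<and>
     (\<forall>u p. smooth_on UNIV u \<longrightarrow> u p \<noteq> 0 \<longrightarrow> NLS \<gamma> V (jet u p) = 0 \<longrightarrow>
        frechet_derivative (NLS \<gamma> V) (at (jet u p)) (prQ Q u p) = 0)"

definition max_inv_alg :: "real \<Rightarrow> (real \<Rightarrow> complex) \<Rightarrow> vfield set" where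
  "max_inv_alg \<gamma> V = {Q. lie_sym \<gamma> V Q}"

text \<open>M = i(psi d_psi - psi* d_psi*) and G(chi) = chi d_x + 1/2 chi_t x M.\<close>
definition M_vf :: vfield where
  "M_vf = (\<lambda>(t, x, u). (0, 0, \<i> * u))"

definition G_vf :: "(real \<Rightarrow> real) \<Rightarrow> vfield" where
  "G_vf ch = (\<lambda>(t, x, u). (0, ch t, of_real (deriv ch t * x / 2) * (\<i> * u)))"

end

theory Submission
  imports Defs
begin

lemma smooth_diff: "smooth_on S f \<Longrightarrow> z \<in> S \<Longrightarrow> f differentiable (at z)"
  by (erule smooth_on.cases) auto

lemma smooth_deriv: "smooth_on S f \<Longrightarrow> smooth_on S (\<lambda>z. frechet_derivative f (at z) v)"
  by (erule smooth_on.cases) auto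

lemma smooth_by_class:
  assumes "P f"
    and "\<And>f z. P f \<Longrightarrow> z \<in> S \<Longrightarrow> f differentiable (at z)"
    and "\<And>f v. P f \<Longrightarrow> P (\<lambda>z. frechet_derivative f (at z) v)"
  shows "smooth_on S f"
  apply (rule smooth_on.coinduct[of "\<lambda>S' g. S' = S \<and> P g" S f])
  using assms by auto

lemma smooth_affine:
  fixes L :: "'a::real_normed_vector \<Rightarrow> 'b::real_normed_vector"
  assumes "bounded_linear L"
  shows "smooth_on S (\<lambda>z. c + L z)"
proof (rule smooth_by_class[where P="\<lambda>f. \<exists>c L. bounded_linear L \<and> f = (\<lambda>z. c + L z)"])
  show "\<exists>c' L'. bounded_linear L' \<and> (\<lambda>z. c + L z) = (\<lambda>z. c' + L' z)"
    by (rule exI[of _ c], rule exI[of _ L], rule conjI[OF assms refl])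
next
  fix f :: "'a \<Rightarrow> 'b" and z assume "\<exists>c L. bounded_linear L \<and> f = (\<lambda>z. c + L z)"
  then obtain c and L :: "'a \<Rightarrow> 'b" where L: "bounded_linear L" and f: "f = (\<lambda>z. c + L z)" by (elim exE conjE)
  have "((\<lambda>z. c + L z) has_derivative (\<lambda>h. 0 + L h)) (at z)"
    by (rule has_derivative_add[OF has_derivative_const bounded_linear_imp_has_derivative[OF L]])
  then have "(f has_derivative L) (at z)" unfolding f by (simp only: add_0_left)
  then show "f differentiable (at z)" by (rule differentiableI)
next
  fix f :: "'a \<Rightarrow> 'b" and v assume "\<exists>c L. bounded_linear L \<and> f = (\<lambda>z. c + L z)"
  then obtain c and L :: "'a \<Rightarrow> 'b" where L: "bounded_linear L" and f: "f = (\<lambda>z. c + L z)" by (elim exE conjE)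
  have "((\<lambda>z. c + L z) has_derivative (\<lambda>h. 0 + L h)) (at z)" for z
    by (rule has_derivative_add[OF has_derivative_const bounded_linear_imp_has_derivative[OF L]])
  then have "(f has_derivative L) (at z)" for z unfolding f by (simp only: add_0_left)
  then have "frechet_derivative f (at z) = L" for z by (rule frechet_derivative_at[symmetric])
  then show "\<exists>c L. bounded_linear L \<and> (\<lambda>z. frechet_derivative f (at z) v) = (\<lambda>z. c + L z)"
  proof (intro exI conjI)
    show "bounded_linear (\<lambda>_::'a. 0::'b)" by (rule bounded_linear_zero)
    show "(\<lambda>z. frechet_derivative f (at z) v) = (\<lambda>z. L v + (\<lambda>_. 0) z)"
      using \<open>\<And>z. frechet_derivative f (at z) = L\<close> by simp
  qed
qed

lemma smooth_const: "smooth_on S (\<lambda>z. c)"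
  using smooth_affine[of "\<lambda>_. 0" S c] by (simp add: bounded_linear_zero)


definition Fd :: "real \<Rightarrow> complex \<Rightarrow> complex \<Rightarrow> complex" where
  "Fd \<gamma> w h = of_real (cmod w powr \<gamma>) * h + of_real (cmod w powr \<gamma> * (inner h (sgn w) * \<gamma> / cmod w)) * w"

lemma NLS_proj: "NLS \<gamma> V = (\<lambda>z. \<i> * fst (snd (snd (snd z))) + snd (snd (snd (snd z)))
   + of_real (norm (fst (snd (snd z))) powr \<gamma>) * fst (snd (snd z)) + V (fst z) * fst (snd (snd z)))"
  by (auto simp: NLS_def fun_eq_iff split: prod.splits)

lemma NLS_deriv:
  assumes V: "(V has_derivative V') (at t)" and u: "u \<noteq> 0"
  shows "(NLS \<gamma> V has_derivative
     (\<lambda>(dt,dx,du,dut,duxx). \<i>*dut + duxx + Fd \<gamma> u du + V' dt * u + V t * du)) (at (t,x,u,ut,uxx))"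
proof -
  have n: "(norm has_derivative (\<lambda>h. inner h (sgn u))) (at u)"
    using has_derivative_norm[OF u] .
  have p: "((\<lambda>z. norm (fst (snd (snd z))) powr \<gamma>) has_derivative
      (\<lambda>h. norm u powr \<gamma> * (0 * ln (norm u) + inner (fst (snd (snd h))) (sgn u) * \<gamma> / norm u)))
      (at (t,x,u,ut,uxx))"
  proof -
    have nn: "((\<lambda>z. norm (fst (snd (snd z)))) has_derivative (\<lambda>h. inner (fst (snd (snd h))) (sgn u))) (at (t,x,u,ut,uxx))"
    proof -
      have n': "(cmod has_derivative (\<lambda>h. inner h (sgn u))) (at (fst (snd (snd (t,x,u,ut,uxx)))))" using n by simp
      have pr: "((\<lambda>z. fst (snd (snd z))) has_derivative (\<lambda>h. fst (snd (snd h)))) (at (t,x,u,ut,uxx))"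
        by (auto intro!: derivative_eq_intros)
      show ?thesis using has_derivative_compose[OF pr n'] by simp
    qed
    show ?thesis
      by (rule has_derivative_eq_rhs[OF has_derivative_powr[OF nn has_derivative_const]]) (use u in auto)
  qed
  have V2: "((\<lambda>z. V (fst z)) has_derivative (\<lambda>h. V' (fst h))) (at (t,x,u,ut,uxx))"
  proof -
    have V0: "(V has_derivative V') (at (fst (t,x,u,ut,uxx)))" using V by simp
    have f1: "((\<lambda>z. fst z) has_derivative (\<lambda>h. fst h)) (at (t,x,u,ut,uxx))"
      by (auto intro!: derivative_eq_intros)
    show ?thesis using has_derivative_compose[OF f1 V0] by simp
  qed
  have pr3: "((\<lambda>z. fst (snd (snd z))) has_derivative (\<lambda>h. fst (snd (snd h)))) (at (t,x,u,ut,uxx))"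
    by (auto intro!: derivative_eq_intros)
  have pr4: "((\<lambda>z. \<i> * fst (snd (snd (snd z)))) has_derivative (\<lambda>h. \<i> * fst (snd (snd (snd h))))) (at (t,x,u,ut,uxx))"
    by (auto intro!: derivative_eq_intros)
  have pr5: "((\<lambda>z. snd (snd (snd (snd z)))) has_derivative (\<lambda>h. snd (snd (snd (snd h))))) (at (t,x,u,ut,uxx))"
    by (auto intro!: derivative_eq_intros)
  have T3: "((\<lambda>z. of_real (norm (fst (snd (snd z))) powr \<gamma>) * fst (snd (snd z))) has_derivative
     (\<lambda>h. of_real (norm u powr \<gamma>) * fst (snd (snd h)) + of_real (cmod u powr \<gamma> *
              (0 * ln (cmod u) + fst (snd (snd h)) \<bullet> sgn u * \<gamma> / cmod u)) * u)) (at (t,x,u,ut,uxx))"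
    using has_derivative_mult[OF has_derivative_of_real[OF p] pr3] by simp
  have T4: "((\<lambda>z. V (fst z) * fst (snd (snd z))) has_derivative (\<lambda>h. V t * fst (snd (snd h)) + V' (fst h) * u)) (at (t,x,u,ut,uxx))"
    using has_derivative_mult[OF V2 pr3] by simp
  show ?thesis
    unfolding NLS_proj
    apply (rule has_derivative_eq_rhs)
    apply (rule has_derivative_add[OF has_derivative_add[OF has_derivative_add[OF pr4 pr5] T3] T4])
    by (clarsimp simp: fun_eq_iff Fd_def split: prod.splits)
qed


lemma NLS_fd:
  assumes "(V has_derivative V') (at t)" "u \<noteq> 0"
  shows "frechet_derivative (NLS \<gamma> V) (at (t,x,u,ut,uxx)) (dt,dx,du,dut,duxx)
     = \<i>*dut + duxx + Fd \<gamma> u du + V' dt * u + V t * du"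
proof -
  have "(\<lambda>(dt,dx,du,dut,duxx). \<i>*dut + duxx + Fd \<gamma> u du + V' dt * u + V t * du) = frechet_derivative (NLS \<gamma> V) (at (t,x,u,ut,uxx))"
    by (rule frechet_derivative_at[OF NLS_deriv[OF assms]])
  from fun_cong[OF this, of "(dt,dx,du,dut,duxx)"] show ?thesis by simp
qed

definition uq :: "real \<Rightarrow> real \<Rightarrow> complex \<Rightarrow> complex \<Rightarrow> complex \<Rightarrow> complex \<Rightarrow> real \<times> real \<Rightarrow> complex" where
  "uq t0 x0 w a b c = (\<lambda>q. w + a * of_real (fst q - t0) + b * of_real (snd q - x0) + c * of_real ((snd q - x0)^2 / 2))"

lemma uq_deriv: "(uq t0 x0 w a b c has_derivative
   (\<lambda>h. a * of_real (fst h) + (b + c * of_real (snd q - x0)) * of_real (snd h))) (at q)"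
  unfolding uq_def
  apply (rule has_derivative_eq_rhs)
   apply (rule derivative_eq_intros refl)+
       apply simp
      apply (rule refl)+
  apply (rule ext)
  apply (simp add: field_simps)
  done

lemma uq_fd: "frechet_derivative (uq t0 x0 w a b c) (at q) =
   (\<lambda>h. a * of_real (fst h) + (b + c * of_real (snd q - x0)) * of_real (snd h))"
  by (rule frechet_derivative_at[OF uq_deriv, symmetric])

lemma pdt_uq: "pdt (uq t0 x0 w a b c) = (\<lambda>q. a)"
  by (auto simp: pdt_def uq_fd fun_eq_iff)

definition lq :: "complex \<Rightarrow> complex \<Rightarrow> real \<Rightarrow> real \<times> real \<Rightarrow> complex" where
  "lq b c x0 = (\<lambda>q. b + c * of_real (snd q - x0))"

lemma pdx_uq: "pdx (uq t0 x0 w a b c) = lq b c x0"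
  by (auto simp: pdx_def uq_fd fun_eq_iff lq_def)

lemma pd_const: "pdt (\<lambda>q. k) = (\<lambda>q. 0)" "pdx (\<lambda>q. k) = (\<lambda>q. 0)"
  by (auto simp: pdt_def pdx_def fun_eq_iff)

lemma lin_deriv: "(lq b c x0 has_derivative (\<lambda>h. c * of_real (snd h))) (at q)"
  unfolding lq_def
  apply (rule has_derivative_eq_rhs)
   apply (rule derivative_eq_intros refl)+
  by (simp add: fun_eq_iff)

lemma pdx_lin: "pdx (lq b c x0) = (\<lambda>q. c)" "pdt (lq b c x0) = (\<lambda>q. 0)"
  using frechet_derivative_at[OF lin_deriv] by (auto simp: pdx_def pdt_def fun_eq_iff)

lemma uq_derivs:
  "pdx (pdx (uq t0 x0 w a b c)) = (\<lambda>q. c)"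
  "pdt (pdt (uq t0 x0 w a b c)) = (\<lambda>q. 0)"
  "pdx (pdt (uq t0 x0 w a b c)) = (\<lambda>q. 0)"
  "pdt (pdx (pdx (uq t0 x0 w a b c))) = (\<lambda>q. 0)"
  "pdx (pdx (pdx (uq t0 x0 w a b c))) = (\<lambda>q. 0)"
  by (simp_all add: pdx_uq pdt_uq pdx_lin pd_const)

lemma uq_at: "uq t0 x0 w a b c (t0, x0) = w"
  by (simp add: uq_def)

lemma uq_smooth: "smooth_on UNIV (uq t0 x0 w a b c)"
proof (rule smooth_on.intros)
  show "\<forall>z\<in>UNIV. uq t0 x0 w a b c differentiable at z"
    using uq_deriv differentiableI by blast
  show "\<forall>v. smooth_on UNIV (\<lambda>z. frechet_derivative (uq t0 x0 w a b c) (at z) v)"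
  proof
    fix v :: "real \<times> real"
    have e: "(\<lambda>z. frechet_derivative (uq t0 x0 w a b c) (at z) v) =
       (\<lambda>z. (a * of_real (fst v) + (b - c * of_real x0) * of_real (snd v)) + (\<lambda>z. c * of_real (snd v) * of_real (snd z)) z)"
      by (auto simp: uq_fd fun_eq_iff algebra_simps)
    have "bounded_linear (\<lambda>z::real\<times>real. c * of_real (snd v) * of_real (snd z))"
      using bounded_linear_mult_right[of "c * of_real (snd v)"] bounded_linear_compose[OF bounded_linear_of_real bounded_linear_snd]
        bounded_linear_compose by (auto simp: o_def)
    then show "smooth_on UNIV (\<lambda>z. frechet_derivative (uq t0 x0 w a b c) (at z) v)"
      unfolding e by (rule smooth_affine)
  qed
qed


lemma fd_local:
  assumes "open X" "x \<in> X" "\<And>y. y \<in> X \<Longrightarrow> f y = g y"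
  shows "frechet_derivative f (at x) = frechet_derivative g (at x)"
proof -
  have "(f has_derivative f') (at x) \<longleftrightarrow> (g has_derivative f') (at x)" for f'
  proof
    assume "(f has_derivative f') (at x)"
    then show "(g has_derivative f') (at x)"
      by (rule has_derivative_transform_within_open[OF _ assms(1,2)]) (simp add: assms(3))
  next
    assume "(g has_derivative f') (at x)"
    then show "(f has_derivative f') (at x)"
      by (rule has_derivative_transform_within_open[OF _ assms(1,2)]) (simp add: assms(3))
  qed
  then show ?thesis unfolding frechet_derivative_def by simp
qed

lemma chain_pt:
  assumes F: "(F has_derivative F') (at (pt u q))" and u: "(u has_derivative u') (at q)"
  shows "((\<lambda>q. F (pt u q)) has_derivative (\<lambda>h. F' (fst h, snd h, u' h))) (at q)"
proof -
  have P: "(pt u has_derivative (\<lambda>h. (fst h, snd h, u' h))) (at q)"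
    unfolding pt_def[abs_def]
    by (auto intro!: derivative_eq_intros u)
  show ?thesis using has_derivative_compose[OF P F] .
qed

lemma open_D: "open D"
proof -
  have e: "D = UNIV \<times> UNIV \<times> (- {0})" by (auto simp: D_def)
  show ?thesis unfolding e by (intro open_Times open_UNIV open_Compl closed_singleton)
qed

lemma pt_in_D: "u q \<noteq> 0 \<Longrightarrow> pt u q \<in> D"
  by (simp add: pt_def D_def)

definition DQ :: "vfield \<Rightarrow> real \<times> real \<times> complex \<Rightarrow> real \<times> real \<times> complex \<Rightarrow> real \<times> real \<times> complex" where
  "DQ Q z h = frechet_derivative Q (at z) h"

definition D2Q :: "vfield \<Rightarrow> real \<times> real \<times> complex \<Rightarrow> real \<times> real \<times> complex \<Rightarrow> real \<times> real \<times> complex \<Rightarrow> real \<times> real \<times> complex" where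
  "D2Q Q e z h = frechet_derivative (\<lambda>z. DQ Q z e) (at z) h"

lemma DQ_deriv: "smooth_on D Q \<Longrightarrow> z \<in> D \<Longrightarrow> (Q has_derivative DQ Q z) (at z)"
proof -
  assume "smooth_on D Q" "z \<in> D"
  then have "Q differentiable (at z)" by (rule smooth_diff)
  then show ?thesis unfolding DQ_def[abs_def] by (rule frechet_derivative_works[THEN iffD1])
qed

lemma D2Q_deriv: "smooth_on D Q \<Longrightarrow> z \<in> D \<Longrightarrow> ((\<lambda>z. DQ Q z e) has_derivative D2Q Q e z) (at z)"
proof -
  assume "smooth_on D Q" "z \<in> D"
  have "smooth_on D (\<lambda>z. DQ Q z e)" unfolding DQ_def by (rule smooth_deriv[of D Q e]) fact
  then have "(\<lambda>z. DQ Q z e) differentiable (at z)" using \<open>z \<in> D\<close> by (rule smooth_diff)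
  then show ?thesis unfolding D2Q_def[abs_def] by (rule frechet_derivative_works[THEN iffD1])
qed

lemma DQ_linear: "smooth_on D Q \<Longrightarrow> z \<in> D \<Longrightarrow> linear (DQ Q z)"
  using DQ_deriv has_derivative_linear by blast

lemma D2Q_linear: "smooth_on D Q \<Longrightarrow> z \<in> D \<Longrightarrow> linear (D2Q Q e z)"
  using D2Q_deriv has_derivative_linear by blast

lemma vec_split: "((0::real), (1::real), \<beta>::complex) = (0,1,0) + Re \<beta> *\<^sub>R (0,0,1) + Im \<beta> *\<^sub>R (0,0,\<i>)"
  by (simp add: complex_eq_iff)

lemma vec_split3: "((r::real), (s::real), \<beta>::complex) = r *\<^sub>R (1,0,0) + s *\<^sub>R (0,1,0) + Re \<beta> *\<^sub>R (0,0,1) + Im \<beta> *\<^sub>R (0,0,\<i>)"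
  by (simp add: complex_eq_iff)

lemma continuous_uq: "continuous_on UNIV (uq t0 x0 w a b c)"
  by (intro continuous_at_imp_continuous_on ballI has_derivative_continuous[OF uq_deriv])


locale crit =
  fixes Q :: vfield and t0 x0 :: real and w a b c :: complex
  assumes sm: "smooth_on D Q" and tau0: "\<forall>z\<in>D. vt Q z = 0" and wnz: "w \<noteq> 0"
begin

abbreviation "u \<equiv> uq t0 x0 w a b c"
definition "N = {q. u q \<noteq> 0}"
abbreviation "p \<equiv> (t0, x0)"
abbreviation "z0 \<equiv> (t0, x0, w)"
definition "hh q h = (fst h, snd h, a * of_real (fst h) + lq b c x0 q * of_real (snd h))"

lemma u_deriv: "(u has_derivative (\<lambda>h. a * of_real (fst h) + lq b c x0 q * of_real (snd h))) (at q)"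
  using uq_deriv[of t0 x0 w a b c q] by (simp add: lq_def)

lemma openN: "open N"
proof -
  have "N = u -` (- {0})" by (auto simp: N_def)
  show ?thesis unfolding \<open>N = u -` (- {0})\<close>
    by (rule continuous_open_vimage[OF open_Compl[OF closed_singleton]]) (rule has_derivative_continuous[OF u_deriv])
qed

lemma pN: "p \<in> N" using wnz by (simp add: N_def uq_at)

lemma ptD: "q \<in> N \<Longrightarrow> pt u q \<in> D" by (simp add: N_def pt_in_D)

lemma pt_p: "pt u p = z0" by (simp add: pt_def uq_at)

definition "C1 q = vu Q (pt u q) - of_real (vx Q (pt u q)) * lq b c x0 q"

lemma charQ_C1: "q \<in> N \<Longrightarrow> charQ Q u q = C1 q"
  using tau0 ptD[of q] by (simp add: charQ_def C1_def pdt_uq pdx_uq)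

lemma comp_deriv:
  assumes "q \<in> N" "(F has_derivative F') (at (pt u q))"
  shows "((\<lambda>q. F (pt u q)) has_derivative (\<lambda>h. F' (hh q h))) (at q)"
  using chain_pt[OF assms(2) u_deriv] by (simp add: hh_def)

lemma dQ: "q \<in> N \<Longrightarrow> ((\<lambda>q. Q (pt u q)) has_derivative (\<lambda>h. DQ Q (pt u q) (hh q h))) (at q)"
proof -
  assume q: "q \<in> N"
  show ?thesis by (rule comp_deriv[OF q DQ_deriv[OF sm ptD[OF q]]])
qed

lemma deta: "q \<in> N \<Longrightarrow> ((\<lambda>q. vu Q (pt u q)) has_derivative (\<lambda>h. snd (snd (DQ Q (pt u q) (hh q h))))) (at q)"
  unfolding vu_def by (rule has_derivative_snd[OF has_derivative_snd[OF dQ]])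

lemma dxi: "q \<in> N \<Longrightarrow> ((\<lambda>q. vx Q (pt u q)) has_derivative (\<lambda>h. fst (snd (DQ Q (pt u q) (hh q h))))) (at q)"
  unfolding vx_def by (rule has_derivative_fst[OF has_derivative_snd[OF dQ]])

lemma dC1: "q \<in> N \<Longrightarrow> (C1 has_derivative (\<lambda>h. snd (snd (DQ Q (pt u q) (hh q h)))
    - (of_real (vx Q (pt u q)) * (c * of_real (snd h)) + of_real (fst (snd (DQ Q (pt u q) (hh q h)))) * lq b c x0 q))) (at q)"
  unfolding C1_def[abs_def]
  by (rule derivative_eq_intros deta dxi lin_deriv refl | assumption)+

lemma lq_p: "lq b c x0 p = b" by (simp add: lq_def)

lemma hh_t: "hh q (1,0) = (1,0,a)" by (simp add: hh_def)
lemma hh_x: "hh q (0,1) = (0,1,lq b c x0 q)" by (simp add: hh_def)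

lemma pdt_charQ: "pdt (charQ Q u) p = snd (snd (DQ Q z0 (1,0,a))) - of_real (fst (snd (DQ Q z0 (1,0,a)))) * b"
proof -
  have "pdt (charQ Q u) p = pdt C1 p"
    unfolding pdt_def using fd_local[OF openN pN, of "charQ Q u" C1] charQ_C1 by simp
  also have "\<dots> = snd (snd (DQ Q z0 (1,0,a))) - of_real (fst (snd (DQ Q z0 (1,0,a)))) * b"
    unfolding pdt_def using fun_cong[OF frechet_derivative_at[OF dC1[OF pN]], of "(1,0)", symmetric] by (simp add: hh_t pt_p lq_p)
  finally show ?thesis .
qed

definition "C2 q = snd (snd (DQ Q (pt u q) (0,1,lq b c x0 q)))
   - (of_real (vx Q (pt u q)) * c + of_real (fst (snd (DQ Q (pt u q) (0,1,lq b c x0 q)))) * lq b c x0 q)"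

lemma pdx_charQ: "q \<in> N \<Longrightarrow> pdx (charQ Q u) q = C2 q"
proof -
  assume q: "q \<in> N"
  have "pdx (charQ Q u) q = pdx C1 q"
    unfolding pdx_def using fd_local[OF openN q, of "charQ Q u" C1] charQ_C1 by simp
  also have "\<dots> = C2 q"
    unfolding pdx_def C2_def using fun_cong[OF frechet_derivative_at[OF dC1[OF q]], of "(0,1)", symmetric] by (simp add: hh_x)
  finally show ?thesis .
qed

abbreviation "ex \<equiv> ((0::real), (1::real), (0::complex))"
abbreviation "e1 \<equiv> ((0::real), (0::real), (1::complex))"
abbreviation "ei \<equiv> ((0::real), (0::real), \<i>)"

definition "E e q = snd (snd (DQ Q (pt u q) e))"
definition "X e q = fst (snd (DQ Q (pt u q) e))"

definition "C3 q = E ex q + Re (lq b c x0 q) *\<^sub>R E e1 q + Im (lq b c x0 q) *\<^sub>R E ei q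
   - (of_real (vx Q (pt u q)) * c + of_real (X ex q + Re (lq b c x0 q) * X e1 q + Im (lq b c x0 q) * X ei q) * lq b c x0 q)"

lemma C2_C3: "q \<in> N \<Longrightarrow> C2 q = C3 q"
proof -
  assume q: "q \<in> N"
  have L: "linear (DQ Q (pt u q))" using DQ_linear[OF sm ptD[OF q]] .
  have "DQ Q (pt u q) (0,1,lq b c x0 q) = DQ Q (pt u q) (ex + Re (lq b c x0 q) *\<^sub>R e1 + Im (lq b c x0 q) *\<^sub>R ei)"
    by (simp only: vec_split[symmetric])
  also have "\<dots> = DQ Q (pt u q) ex + Re (lq b c x0 q) *\<^sub>R DQ Q (pt u q) e1
      + Im (lq b c x0 q) *\<^sub>R DQ Q (pt u q) ei"
    by (simp only: linear_add[OF L] linear_scale[OF L])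
  finally have "DQ Q (pt u q) (0,1,lq b c x0 q) = DQ Q (pt u q) ex + Re (lq b c x0 q) *\<^sub>R DQ Q (pt u q) e1
      + Im (lq b c x0 q) *\<^sub>R DQ Q (pt u q) ei" .
  then show ?thesis unfolding C2_def C3_def E_def X_def by simp
qed

lemma z0D: "z0 \<in> D" using wnz by (simp add: D_def)

lemma dE: "((\<lambda>q. E e q) has_derivative (\<lambda>h. snd (snd (D2Q Q e z0 (hh p h))))) (at p)"
proof -
  have "((\<lambda>z. DQ Q z e) has_derivative D2Q Q e (pt u p)) (at (pt u p))"
    using D2Q_deriv[OF sm z0D] pt_p by simp
  from comp_deriv[OF pN this] show ?thesis unfolding E_def[abs_def] pt_p
    by (auto intro!: derivative_eq_intros)
qed

lemma dX: "((\<lambda>q. X e q) has_derivative (\<lambda>h. fst (snd (D2Q Q e z0 (hh p h))))) (at p)"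
proof -
  have "((\<lambda>z. DQ Q z e) has_derivative D2Q Q e (pt u p)) (at (pt u p))"
    using D2Q_deriv[OF sm z0D] pt_p by simp
  from comp_deriv[OF pN this] show ?thesis unfolding X_def[abs_def] pt_p
    by (auto intro!: derivative_eq_intros)
qed

lemma dxi0: "((\<lambda>q. vx Q (pt u q)) has_derivative (\<lambda>h. fst (snd (DQ Q z0 (hh p h))))) (at p)"
  using dxi[OF pN] by (simp add: pt_p)

abbreviation "v0 \<equiv> ((0::real), (1::real), b)"

lemma pdx_C3: "pdx C3 p = snd (snd (D2Q Q ex z0 v0)) + Re c *\<^sub>R snd (snd (DQ Q z0 e1)) + Re b *\<^sub>R snd (snd (D2Q Q e1 z0 v0))
   + Im c *\<^sub>R snd (snd (DQ Q z0 ei)) + Im b *\<^sub>R snd (snd (D2Q Q ei z0 v0))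
   - (of_real (fst (snd (DQ Q z0 v0))) * c
      + of_real (fst (snd (D2Q Q ex z0 v0)) + Re c * fst (snd (DQ Q z0 e1)) + Re b * fst (snd (D2Q Q e1 z0 v0))
           + Im c * fst (snd (DQ Q z0 ei)) + Im b * fst (snd (D2Q Q ei z0 v0))) * b
      + of_real (fst (snd (DQ Q z0 ex)) + Re b * fst (snd (DQ Q z0 e1)) + Im b * fst (snd (DQ Q z0 ei))) * c)"
proof -
  have "(C3 has_derivative (\<lambda>h. snd (snd (D2Q Q ex z0 (hh p h)))
     + (Re (lq b c x0 p) *\<^sub>R snd (snd (D2Q Q e1 z0 (hh p h))) + Re (c * of_real (snd h)) *\<^sub>R E e1 p)
     + (Im (lq b c x0 p) *\<^sub>R snd (snd (D2Q Q ei z0 (hh p h))) + Im (c * of_real (snd h)) *\<^sub>R E ei p)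
     - (of_real (vx Q (pt u p)) * 0 + of_real (fst (snd (DQ Q z0 (hh p h)))) * c
        + (of_real (X ex p + Re (lq b c x0 p) * X e1 p + Im (lq b c x0 p) * X ei p) * (c * of_real (snd h))
          + of_real (fst (snd (D2Q Q ex z0 (hh p h)))
             + (Re (lq b c x0 p) * fst (snd (D2Q Q e1 z0 (hh p h))) + Re (c * of_real (snd h)) * X e1 p)
             + (Im (lq b c x0 p) * fst (snd (D2Q Q ei z0 (hh p h))) + Im (c * of_real (snd h)) * X ei p)) * lq b c x0 p))))
     (at p)"
    unfolding C3_def[abs_def]
    by (rule dE dX dxi0 lin_deriv derivative_eq_intros refl)+
  from fun_cong[OF frechet_derivative_at[OF this], of "(0,1)", symmetric] show ?thesis
    unfolding pdx_def
    by (simp add: hh_x lq_p pt_p E_def X_def algebra_simps)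
qed

lemma pdxx_charQ: "pdx (pdx (charQ Q u)) p = pdx C3 p"
proof -
  have "frechet_derivative (pdx (charQ Q u)) (at p) = frechet_derivative C3 (at p)"
    by (rule fd_local[OF openN pN]) (simp add: pdx_charQ C2_C3)
  then show ?thesis unfolding pdx_def[of "pdx (charQ Q u)" p] pdx_def[of C3 p] by simp
qed

lemma jet_p: "jet u p = (t0, x0, w, a, c)"
  by (simp add: jet_def uq_at pdt_uq uq_derivs)

lemma NLS_jet: "NLS \<gamma> V (jet u p) = \<i> * a + c + of_real (cmod w powr \<gamma>) * w + V t0 * w"
  by (simp add: jet_p NLS_def)

lemma crit_value:
  assumes V: "(V has_derivative V') (at t0)"
  shows "frechet_derivative (NLS \<gamma> V) (at (jet u p)) (prQ Q u p) =
    \<i> * (snd (snd (DQ Q z0 (1,0,a))) - of_real (fst (snd (DQ Q z0 (1,0,a)))) * b) + pdx C3 p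
    + Fd \<gamma> w (vu Q z0) + V t0 * vu Q z0"
proof -
  have lin: "linear V'" using V has_derivative_linear by blast
  have t0: "vt Q z0 = 0" using tau0 z0D by blast
  have "prQ Q u p = (0, vx Q z0, vu Q z0, pdt (charQ Q u) p, pdx (pdx (charQ Q u)) p)"
    by (simp add: prQ_def pt_p t0 eta_t_def eta_xx_def uq_derivs pd_const)
  then show ?thesis
    by (simp add: jet_p NLS_fd[OF V wnz] linear_0[OF lin] pdt_charQ pdxx_charQ)
qed

end


lemma jet_uq: "jet (uq t0 x0 w a b c) (t0, x0) = (t0, x0, w, a, c)"
  by (simp add: jet_def uq_at pdt_uq uq_derivs)

lemma smooth_V2: "smooth_on UNIV (\<lambda>t::real. complex_of_real (t - t0))"
proof -
  have "smooth_on UNIV (\<lambda>t::real. (- complex_of_real t0) + of_real t)"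
    by (rule smooth_affine) (rule bounded_linear_of_real)
  then show ?thesis by simp
qed

lemma tau_zero:
  assumes lie: "\<And>V. smooth_on UNIV V \<Longrightarrow> lie_sym \<gamma> V Q" and z: "z \<in> D"
  shows "vt Q z = 0"
proof -
  obtain t0 x0 w where zz: "z = (t0, x0, w)" and w: "w \<noteq> 0" using z by (cases z) (auto simp: D_def)
  define a where "a = \<i> * of_real (cmod w powr \<gamma>) * w"
  define u where "u = uq t0 x0 w a 0 0"
  have us: "smooth_on UNIV u" unfolding u_def by (rule uq_smooth)
  have up: "u (t0,x0) \<noteq> 0" using w by (simp add: u_def uq_at)
  have j: "jet u (t0,x0) = (t0,x0,w,a,0)" unfolding u_def by (rule jet_uq)
  have pz: "pt u (t0,x0) = z" by (simp add: pt_def u_def uq_at zz)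
  obtain et exx where pr: "prQ Q u (t0,x0) = (vt Q z, vx Q z, vu Q z, et, exx)"
    by (simp add: prQ_def pz)
  have V1: "((\<lambda>_::real. 0::complex) has_derivative (\<lambda>h. 0)) (at t0)" by simp
  have V2: "((\<lambda>t::real. complex_of_real (t - t0)) has_derivative (\<lambda>h. of_real h)) (at t0)"
    by (auto intro!: derivative_eq_intros)
  have n1: "NLS \<gamma> (\<lambda>_. 0) (jet u (t0,x0)) = 0" and n2: "NLS \<gamma> (\<lambda>t. complex_of_real (t - t0)) (jet u (t0,x0)) = 0"
    by (simp_all add: j NLS_def a_def mult.assoc[symmetric])
  have c1: "frechet_derivative (NLS \<gamma> (\<lambda>_. 0)) (at (jet u (t0,x0))) (prQ Q u (t0,x0)) = 0"
    using lie[OF smooth_const] us up n1 unfolding lie_sym_def by blast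
  have c2: "frechet_derivative (NLS \<gamma> (\<lambda>t. complex_of_real (t - t0))) (at (jet u (t0,x0))) (prQ Q u (t0,x0)) = 0"
    using lie[OF smooth_V2] us up n2 unfolding lie_sym_def by blast
  have "of_real (vt Q z) * w = 0"
    using c1 c2 unfolding j pr NLS_fd[OF V1 w] NLS_fd[OF V2 w] by simp
  then show ?thesis using w by simp
qed

definition TT :: "vfield \<Rightarrow> real \<times> real \<times> complex \<Rightarrow> complex \<Rightarrow> complex \<Rightarrow> complex" where
  "TT Q z a b = snd (snd (DQ Q z (1,0,a))) - of_real (fst (snd (DQ Q z (1,0,a)))) * b"

definition XX :: "vfield \<Rightarrow> real \<times> real \<times> complex \<Rightarrow> complex \<Rightarrow> complex \<Rightarrow> complex" where
  "XX Q z b c = snd (snd (D2Q Q (0,1,0) z (0,1,b))) + Re c *\<^sub>R snd (snd (DQ Q z (0,0,1))) + Re b *\<^sub>R snd (snd (D2Q Q (0,0,1) z (0,1,b)))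
   + Im c *\<^sub>R snd (snd (DQ Q z (0,0,\<i>))) + Im b *\<^sub>R snd (snd (D2Q Q (0,0,\<i>) z (0,1,b)))
   - (of_real (fst (snd (DQ Q z (0,1,b)))) * c
      + of_real (fst (snd (D2Q Q (0,1,0) z (0,1,b))) + Re c * fst (snd (DQ Q z (0,0,1))) + Re b * fst (snd (D2Q Q (0,0,1) z (0,1,b)))
           + Im c * fst (snd (DQ Q z (0,0,\<i>))) + Im b * fst (snd (D2Q Q (0,0,\<i>) z (0,1,b)))) * b
      + of_real (fst (snd (DQ Q z (0,1,0))) + Re b * fst (snd (DQ Q z (0,0,1))) + Im b * fst (snd (DQ Q z (0,0,\<i>)))) * c)"

lemma crit_eq:
  assumes sm: "smooth_on D Q" and tau0: "\<forall>z\<in>D. vt Q z = 0"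
    and lie: "\<And>V0::complex. lie_sym \<gamma> (\<lambda>_. V0) Q" and w: "w \<noteq> 0"
    and eq: "\<i> * a + c + of_real (cmod w powr \<gamma>) * w + V0 * w = 0"
  shows "\<i> * TT Q (t0,x0,w) a b + XX Q (t0,x0,w) b c + Fd \<gamma> w (vu Q (t0,x0,w)) + V0 * vu Q (t0,x0,w) = 0"
proof -
  interpret crit Q t0 x0 w a b c using sm tau0 w by unfold_locales
  have V: "((\<lambda>_::real. V0) has_derivative (\<lambda>h. 0)) (at t0)" by simp
  have "frechet_derivative (NLS \<gamma> (\<lambda>_. V0)) (at (jet u p)) (prQ Q u p) = 0"
    using lie[of V0] uq_smooth[of t0 x0 w a b c] pN eq NLS_jet unfolding lie_sym_def N_def by auto
  then show ?thesis using crit_value[OF V, of \<gamma>] pdx_C3 unfolding TT_def XX_def by simp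
qed


locale fwd =
  fixes Q :: vfield and \<gamma> :: real
  assumes sm: "smooth_on D Q" and tau0: "\<forall>z\<in>D. vt Q z = 0"
    and lie: "\<And>V0::complex. lie_sym \<gamma> (\<lambda>_. V0) Q"
begin

abbreviation "Deta z h \<equiv> snd (snd (DQ Q z h))"
abbreviation "Dxi z h \<equiv> fst (snd (DQ Q z h))"

lemma ceq:
  assumes "w \<noteq> 0"
  shows "\<i> * TT Q (t0,x0,w) (\<i> * (c + of_real (cmod w powr \<gamma>) * w + V0 * w)) b + XX Q (t0,x0,w) b c
     + Fd \<gamma> w (vu Q (t0,x0,w)) + V0 * vu Q (t0,x0,w) = 0"
  by (rule crit_eq[OF sm tau0 lie assms]) (simp add: algebra_simps)

lemma DQ_shift:
  assumes "z \<in> D"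
  shows "DQ Q z (r, s, a1) = DQ Q z (r, s, a2) + DQ Q z (0, 0, a1 - a2)"
proof -
  have L: "linear (DQ Q z)" by (rule DQ_linear[OF sm assms])
  have "(r, s, a1) = (r, s, a2) + ((0::real), (0::real), a1 - a2)" by simp
  then show ?thesis by (metis linear_add[OF L])
qed

lemma TT_shift:
  assumes "z \<in> D"
  shows "TT Q z a1 b = TT Q z a2 b + (Deta z (0,0,a1 - a2) - of_real (Dxi z (0,0,a1 - a2)) * b)"
  unfolding TT_def using DQ_shift[OF assms, of 1 0 a1 a2] by (simp add: algebra_simps)

lemma eta_u:
  assumes w: "w \<noteq> 0"
  shows "Deta (t0,x0,w) (0,0,\<delta>) = \<delta> * vu Q (t0,x0,w) / w"
proof -
  let ?z = "(t0,x0,w)"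
  have zD: "?z \<in> D" using w by (simp add: D_def)
  let ?f = "of_real (cmod w powr \<gamma>) * w"
  define V where "V = - \<i> * \<delta> / w"
  let ?a1 = "\<i> * (0 + ?f + V * w)" and ?a0 = "\<i> * (0 + ?f + 0 * w)"
  have e1: "\<i> * TT Q ?z ?a1 0 + XX Q ?z 0 0 + Fd \<gamma> w (vu Q ?z) + V * vu Q ?z = 0"
    using ceq[OF w, of t0 x0 0 V 0] .
  have e0: "\<i> * TT Q ?z ?a0 0 + XX Q ?z 0 0 + Fd \<gamma> w (vu Q ?z) + 0 * vu Q ?z = 0"
    using ceq[OF w, of t0 x0 0 0 0] .
  have d: "?a1 - ?a0 = \<delta>" using w by (simp add: V_def field_simps)
  have "\<i> * Deta ?z (0,0,\<delta>) + V * vu Q ?z =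
      (\<i> * TT Q ?z ?a1 0 + XX Q ?z 0 0 + Fd \<gamma> w (vu Q ?z) + V * vu Q ?z)
    - (\<i> * TT Q ?z ?a0 0 + XX Q ?z 0 0 + Fd \<gamma> w (vu Q ?z) + 0 * vu Q ?z)"
    using TT_shift[OF zD, of ?a1 0 ?a0] d by (simp add: algebra_simps)
  also have "\<dots> = 0" using e1 e0 by simp
  finally have "\<i> * Deta ?z (0,0,\<delta>) + V * vu Q ?z = 0" .
  then show ?thesis using w unfolding V_def by (simp add: field_simps)
qed

lemma xi_u:
  assumes w: "w \<noteq> 0"
  shows "Dxi (t0,x0,w) (0,0,\<delta>) = 0"
proof -
  let ?z = "(t0,x0,w)"
  have zD: "?z \<in> D" using w by (simp add: D_def)
  let ?f = "of_real (cmod w powr \<gamma>) * w"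
  define V where "V = - \<i> * \<delta> / w"
  let ?a1 = "\<i> * (0 + ?f + V * w)" and ?a0 = "\<i> * (0 + ?f + 0 * w)"
  have e1: "\<i> * TT Q ?z ?a1 1 + XX Q ?z 1 0 + Fd \<gamma> w (vu Q ?z) + V * vu Q ?z = 0"
    using ceq[OF w, of t0 x0 0 V 1] .
  have e0: "\<i> * TT Q ?z ?a0 1 + XX Q ?z 1 0 + Fd \<gamma> w (vu Q ?z) + 0 * vu Q ?z = 0"
    using ceq[OF w, of t0 x0 0 0 1] .
  have d: "?a1 - ?a0 = \<delta>" using w by (simp add: V_def field_simps)
  have "\<i> * (Deta ?z (0,0,\<delta>) - of_real (Dxi ?z (0,0,\<delta>))) + V * vu Q ?z =
      (\<i> * TT Q ?z ?a1 1 + XX Q ?z 1 0 + Fd \<gamma> w (vu Q ?z) + V * vu Q ?z)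
    - (\<i> * TT Q ?z ?a0 1 + XX Q ?z 1 0 + Fd \<gamma> w (vu Q ?z) + 0 * vu Q ?z)"
  proof -
    have T: "TT Q ?z ?a1 1 = TT Q ?z ?a0 1 + (Deta ?z (0,0,\<delta>) - of_real (Dxi ?z (0,0,\<delta>))) * 1"
      using TT_shift[OF zD, of ?a1 1 ?a0] unfolding d by simp
    show ?thesis unfolding T by (simp add: algebra_simps)
  qed
  also have "\<dots> = 0" using e1 e0 by simp
  finally have "\<i> * (Deta ?z (0,0,\<delta>) - of_real (Dxi ?z (0,0,\<delta>))) + V * vu Q ?z = 0" .
  then have "\<i> * of_real (Dxi ?z (0,0,\<delta>)) = 0"
    using w unfolding eta_u[OF w] V_def by (simp add: field_simps)
  then show ?thesis by simp
qed

lemma xi_x: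
  assumes w: "w \<noteq> 0"
  shows "Dxi (t0,x0,w) (0,1,0) = 0"
proof -
  let ?z = "(t0,x0,w)"
  have zD: "?z \<in> D" using w by (simp add: D_def)
  let ?f = "of_real (cmod w powr \<gamma>) * w"
  let ?a1 = "\<i> * (1 + ?f + 0 * w)" and ?a0 = "\<i> * (0 + ?f + 0 * w)"
  have e1: "\<i> * TT Q ?z ?a1 0 + XX Q ?z 0 1 + Fd \<gamma> w (vu Q ?z) + 0 * vu Q ?z = 0"
    using ceq[OF w, of t0 x0 1 0 0] .
  have e0: "\<i> * TT Q ?z ?a0 0 + XX Q ?z 0 0 + Fd \<gamma> w (vu Q ?z) + 0 * vu Q ?z = 0"
    using ceq[OF w, of t0 x0 0 0 0] .
  have d: "?a1 - ?a0 = \<i>" by (simp add: algebra_simps)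
  have x1: "XX Q ?z 0 1 = XX Q ?z 0 0 + Deta ?z (0,0,1) - 2 * of_real (Dxi ?z (0,1,0))"
    unfolding XX_def by simp
  have "\<i> * Deta ?z (0,0,\<i>) + Deta ?z (0,0,1) - 2 * of_real (Dxi ?z (0,1,0)) =
      (\<i> * TT Q ?z ?a1 0 + XX Q ?z 0 1 + Fd \<gamma> w (vu Q ?z) + 0 * vu Q ?z)
    - (\<i> * TT Q ?z ?a0 0 + XX Q ?z 0 0 + Fd \<gamma> w (vu Q ?z) + 0 * vu Q ?z)"
    using TT_shift[OF zD, of ?a1 0 ?a0] d x1 by (simp add: algebra_simps)
  also have "\<dots> = 0" using e1 e0 by simp
  finally have "\<i> * Deta ?z (0,0,\<i>) + Deta ?z (0,0,1) - 2 * of_real (Dxi ?z (0,1,0)) = 0" .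
  then show ?thesis using w unfolding eta_u[OF w] by (simp add: field_simps)
qed

end


lemma deriv_transfer:
  assumes "(F has_derivative F') (at z)" "(G has_derivative G') (at z)" "open S" "z \<in> S"
    "\<And>y. y \<in> S \<Longrightarrow> F y = G y"
  shows "F' = G'"
proof -
  have "(G has_derivative F') (at z)"
    by (rule has_derivative_transform_within_open[OF assms(1) assms(3,4)]) (simp add: assms(5))
  then show ?thesis using assms(2) by (rule has_derivative_unique)
qed

lemma const_1d:
  fixes f :: "real \<Rightarrow> 'b::real_normed_vector"
  assumes "\<And>s. (f has_derivative (\<lambda>h. h *\<^sub>R c)) (at s)"
  shows "f s = f 0 + s *\<^sub>R c"
proof -
  have "\<exists>k. \<forall>x\<in>UNIV. f x - x *\<^sub>R c = k"
  proof (rule has_derivative_zero_constant)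
    fix x :: real
    have "((\<lambda>x. f x - x *\<^sub>R c) has_derivative (\<lambda>h. h *\<^sub>R c - h *\<^sub>R c)) (at x)"
      by (rule has_derivative_diff[OF assms]) (rule has_derivative_scaleR_left[OF has_derivative_ident])
    then show "((\<lambda>x. f x - x *\<^sub>R c) has_derivative (\<lambda>h. 0)) (at x within UNIV)" by simp
  qed simp
  then obtain k where "\<And>x. f x - x *\<^sub>R c = k" by blast
  from this[of s] this[of 0] show ?thesis by (simp add: algebra_simps)
qed

lemma const_punct:
  fixes g :: "complex \<Rightarrow> 'b::banach"
  assumes "\<And>w. w \<noteq> 0 \<Longrightarrow> (g has_derivative (\<lambda>h. 0)) (at w)" "w \<noteq> 0"
  shows "g w = g 1"
proof -
  have "g constant_on (- {0})"
  proof (rule has_derivative_zero_connected_constant_on[where K="{}"])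
    show "connected (- {0::complex})" by (rule connected_punctured_universe) simp
    show "open (- {0::complex})" by (rule open_Compl[OF closed_singleton])
    show "continuous_on (- {0}) g"
      by (intro continuous_at_imp_continuous_on ballI has_derivative_continuous[OF assms(1)]) simp
    show "\<forall>x\<in>- {0} - {}. (g has_derivative (\<lambda>h. 0)) (at x within - {0})"
    proof
      fix x :: complex assume "x \<in> - {0} - {}"
      then have "x \<noteq> 0" by simp
      then show "(g has_derivative (\<lambda>h. 0)) (at x within - {0})"
        by (rule has_derivative_at_withinI[OF assms(1)])
    qed
  qed simp
  then obtain y where "\<forall>x\<in>- {0}. g x = y" unfolding constant_on_def by blast
  then show ?thesis using assms(2) by simp
qed

context fwd begin

lemma vu_deriv: "z \<in> D \<Longrightarrow> (vu Q has_derivative (\<lambda>h. Deta z h)) (at z)"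
  unfolding vu_def[abs_def] by (rule has_derivative_snd[OF has_derivative_snd[OF DQ_deriv[OF sm]]])

lemma vx_deriv: "z \<in> D \<Longrightarrow> (vx Q has_derivative (\<lambda>h. Dxi z h)) (at z)"
  unfolding vx_def[abs_def] by (rule has_derivative_fst[OF has_derivative_snd[OF DQ_deriv[OF sm]]])

lemma line_w: "((\<lambda>w. (t::real, x::real, w::complex)) has_derivative (\<lambda>h. (0, 0, h))) (at w)"
  by (auto intro!: derivative_eq_intros)

lemma eta_hom:
  assumes w: "w \<noteq> 0"
  shows "vu Q (t,x,w) = w * vu Q (t,x,1)"
proof -
  let ?g = "\<lambda>w. vu Q (t,x,w) / w"
  have "?g w = ?g 1"
  proof (rule const_punct[OF _ w])
    fix w :: complex assume w: "w \<noteq> 0"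
    have zD: "(t,x,w) \<in> D" using w by (simp add: D_def)
    have d1: "((\<lambda>w. vu Q (t,x,w)) has_derivative (\<lambda>h. Deta (t,x,w) (0,0,h))) (at w)"
      using has_derivative_compose[OF line_w vu_deriv[OF zD]] .
    have d2: "((\<lambda>w. vu Q (t,x,w)) has_derivative (\<lambda>h. h * vu Q (t,x,w) / w)) (at w)"
      using d1 unfolding eta_u[OF w] .
    have "(?g has_derivative (\<lambda>h. (h * vu Q (t,x,w) / w * w - vu Q (t,x,w) * h) / (w * w))) (at w)"
      by (rule has_derivative_divide'[OF d2 has_derivative_ident w])
    moreover have "(\<lambda>h. (h * vu Q (t,x,w) / w * w - vu Q (t,x,w) * h) / (w * w)) = (\<lambda>h. 0)"
    proof (rule ext)
      fix h
      have e1: "h * vu Q (t,x,w) / w * w = h * vu Q (t,x,w)" using w by simp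
      have e2: "h * vu Q (t,x,w) - vu Q (t,x,w) * h = 0" by (simp add: mult.commute)
      show "(h * vu Q (t,x,w) / w * w - vu Q (t,x,w) * h) / (w * w) = 0" unfolding e1 e2 by simp
    qed
    ultimately show "(?g has_derivative (\<lambda>h. 0)) (at w)" by simp
  qed
  then have e: "vu Q (t,x,w) / w = vu Q (t,x,1)" by simp
  have "vu Q (t,x,w) = vu Q (t,x,w) / w * w" using w by simp
  also have "\<dots> = w * vu Q (t,x,1)" unfolding e by (rule mult.commute)
  finally show ?thesis .
qed

lemma xi_const_w:
  assumes w: "w \<noteq> 0"
  shows "vx Q (t,x,w) = vx Q (t,x,1)"
proof (rule const_punct[OF _ w])
  fix w :: complex assume w: "w \<noteq> 0"
  have zD: "(t,x,w) \<in> D" using w by (simp add: D_def)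
  have d1: "((\<lambda>w. vx Q (t,x,w)) has_derivative (\<lambda>h. Dxi (t,x,w) (0,0,h))) (at w)"
    using has_derivative_compose[OF line_w vx_deriv[OF zD]] .
  then show "((\<lambda>w. vx Q (t,x,w)) has_derivative (\<lambda>h. 0)) (at w)"
    unfolding xi_u[OF w] .
qed

lemma xi_const_x: "vx Q (t,x,1) = vx Q (t,0,1)"
proof -
  have "vx Q (t,x,1) = vx Q (t,0,1) + x *\<^sub>R 0"
  proof (rule const_1d)
    fix s :: real
    have zD: "(t,s,1) \<in> D" by (simp add: D_def)
    have l: "((\<lambda>s. (t, s, 1::complex)) has_derivative (\<lambda>h. (0, h, 0))) (at s)"
      by (auto intro!: derivative_eq_intros)
    have d1: "((\<lambda>s. vx Q (t,s,1)) has_derivative (\<lambda>h. Dxi (t,s,1) (0,h,0))) (at s)"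
      using has_derivative_compose[OF l vx_deriv[OF zD]] .
    have L: "linear (DQ Q (t,s,1))" by (rule DQ_linear[OF sm zD])
    have "Dxi (t,s,1) (0,h,0) = 0" for h
    proof -
      have "DQ Q (t,s,1) (h *\<^sub>R (0,1,0)) = h *\<^sub>R DQ Q (t,s,1) (0,1,0)" by (rule linear_scale[OF L])
      then have "Dxi (t,s,1) (0,h,0) = h * Dxi (t,s,1) (0,1,0)" by simp
      then show ?thesis using xi_x[of 1 t s] by simp
    qed
    then show "((\<lambda>s. vx Q (t,s,1)) has_derivative (\<lambda>h. h *\<^sub>R 0)) (at s)"
      using d1 by simp
  qed
  then show ?thesis by simp
qed

lemma xi_fun: "w \<noteq> 0 \<Longrightarrow> vx Q (t,x,w) = vx Q (t,0,1)"
proof -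
  assume w: "w \<noteq> 0"
  have "vx Q (t,x,w) = vx Q (t,x,1)" by (rule xi_const_w[OF w])
  also have "\<dots> = vx Q (t,0,1)" by (rule xi_const_x)
  finally show ?thesis .
qed

end


lemma compose_at:
  assumes "(f has_derivative f') (at x)" "f x = y" "(g has_derivative g') (at y)"
  shows "((\<lambda>x. g (f x)) has_derivative (\<lambda>h. g' (f' h))) (at x)"
  using has_derivative_compose[OF assms(1), of g g'] assms(2,3) by simp

context fwd begin

lemma P_deriv: "((\<lambda>y::real\<times>real\<times>complex. (fst y, fst (snd y), 1::complex)) has_derivative (\<lambda>h. (fst h, fst (snd h), 0))) (at z)"
  by (auto intro!: derivative_eq_intros)

lemma P2_deriv: "((\<lambda>y::real\<times>real\<times>complex. (fst y, 0::real, 1::complex)) has_derivative (\<lambda>h. (fst h, 0, 0))) (at z)"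
  by (auto intro!: derivative_eq_intros simp: zero_prod_def)

lemma PD: "(t, x, 1::complex) \<in> D" by (simp add: D_def)

lemma Deta_formula:
  assumes w: "w \<noteq> 0"
  shows "Deta (t,x,w) h = snd (snd h) * vu Q (t,x,1) + w * Deta (t,x,1) (fst h, fst (snd h), 0)"
proof -
  let ?z = "(t,x,w)"
  have zD: "?z \<in> D" using w by (simp add: D_def)
  let ?G2 = "\<lambda>y::real\<times>real\<times>complex. vu Q (fst y, fst (snd y), 1)"
  have g2: "(?G2 has_derivative (\<lambda>h. Deta (t,x,1) (fst h, fst (snd h), 0))) (at ?z)"
    using compose_at[OF P_deriv[of ?z] _ vu_deriv[OF PD[of t x]]] by simp
  have g3: "((\<lambda>y::real\<times>real\<times>complex. snd (snd y)) has_derivative (\<lambda>h. snd (snd h))) (at ?z)"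
    by (auto intro!: derivative_eq_intros)
  have G: "((\<lambda>y. snd (snd y) * ?G2 y) has_derivative
      (\<lambda>h. snd (snd ?z) * Deta (t,x,1) (fst h, fst (snd h), 0) + snd (snd h) * ?G2 ?z)) (at ?z)"
    by (rule has_derivative_mult[OF g3 g2])
  have "(\<lambda>h. Deta ?z h) = (\<lambda>h. snd (snd ?z) * Deta (t,x,1) (fst h, fst (snd h), 0) + snd (snd h) * ?G2 ?z)"
  proof (rule deriv_transfer[OF vu_deriv[OF zD] G open_D zD])
    fix y assume "y \<in> D"
    then obtain a b c where y: "y = (a,b,c)" "c \<noteq> 0" by (cases y) (auto simp: D_def)
    show "vu Q y = snd (snd y) * ?G2 y" unfolding y using eta_hom[OF y(2)] by simp
  qed
  from fun_cong[OF this, of h] show ?thesis by (simp add: add.commute)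
qed

lemma Dxi_formula:
  assumes w: "w \<noteq> 0"
  shows "Dxi (t,x,w) h = Dxi (t,0,1) (fst h, 0, 0)"
proof -
  let ?z = "(t,x,w)"
  have zD: "?z \<in> D" using w by (simp add: D_def)
  let ?G2 = "\<lambda>y::real\<times>real\<times>complex. vx Q (fst y, 0, 1)"
  have g2: "(?G2 has_derivative (\<lambda>h. Dxi (t,0,1) (fst h, 0, 0))) (at ?z)"
    using compose_at[OF P2_deriv[of ?z] _ vx_deriv[OF PD[of t 0]]] by simp
  have "(\<lambda>h. Dxi ?z h) = (\<lambda>h. Dxi (t,0,1) (fst h, 0, 0))"
  proof (rule deriv_transfer[OF vx_deriv[OF zD] g2 open_D zD])
    fix y assume "y \<in> D"
    then obtain a b c where y: "y = (a,b,c)" "c \<noteq> 0" by (cases y) (auto simp: D_def)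
    show "vx Q y = ?G2 y" unfolding y using xi_fun[OF y(2)] by simp
  qed
  from fun_cong[OF this, of h] show ?thesis by simp
qed

lemma DQ0: "z \<in> D \<Longrightarrow> DQ Q z (0,0,0) = 0"
  using linear_0[OF DQ_linear[OF sm]] by (simp add: zero_prod_def)

lemma D2Q0: "z \<in> D \<Longrightarrow> D2Q Q e z (0,0,0) = 0"
  using linear_0[OF D2Q_linear[OF sm]] by (simp add: zero_prod_def)

lemma Dxi_e_zero: "w \<noteq> 0 \<Longrightarrow> Dxi (t,x,w) (0, r, s) = 0"
  using Dxi_formula DQ0[OF PD] by simp

lemma D2eta_deriv: "z \<in> D \<Longrightarrow> ((\<lambda>y. Deta y e) has_derivative (\<lambda>v. snd (snd (D2Q Q e z v)))) (at z)"
  by (rule has_derivative_snd[OF has_derivative_snd[OF D2Q_deriv[OF sm]]])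

lemma D2xi_deriv: "z \<in> D \<Longrightarrow> ((\<lambda>y. Dxi y e) has_derivative (\<lambda>v. fst (snd (D2Q Q e z v)))) (at z)"
  by (rule has_derivative_fst[OF has_derivative_snd[OF D2Q_deriv[OF sm]]])

lemma D2xi_zero:
  assumes w: "w \<noteq> 0"
  shows "fst (snd (D2Q Q (0,r,s) (t,x,w) v)) = 0"
proof -
  have zD: "(t,x,w) \<in> D" using w by (simp add: D_def)
  have "(\<lambda>v. fst (snd (D2Q Q (0,r,s) (t,x,w) v))) = (\<lambda>v. 0)"
  proof (rule deriv_transfer[OF D2xi_deriv[OF zD] has_derivative_const open_D zD])
    fix y assume "y \<in> D"
    then obtain a b c where y: "y = (a,b,c)" "c \<noteq> 0" by (cases y) (auto simp: D_def)
    show "Dxi y (0,r,s) = 0" unfolding y by (rule Dxi_e_zero[OF y(2)])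
  qed
  from fun_cong[OF this, of v] show ?thesis by simp
qed

end


lemma re_im_comb: "Re b *\<^sub>R L + Im b *\<^sub>R (\<i> * L) = b * (L::complex)"
  by (simp add: scaleR_conv_of_real complex_eq_iff algebra_simps)

context fwd begin

lemma D2eta_e1:
  assumes w: "w \<noteq> 0"
  shows "snd (snd (D2Q Q (0,0,1) (t,x,w) v)) = Deta (t,x,1) (fst v, fst (snd v), 0)"
proof -
  let ?z = "(t,x,w)"
  have zD: "?z \<in> D" using w by (simp add: D_def)
  let ?G2 = "\<lambda>y::real\<times>real\<times>complex. vu Q (fst y, fst (snd y), 1)"
  have g2: "(?G2 has_derivative (\<lambda>h. Deta (t,x,1) (fst h, fst (snd h), 0))) (at ?z)"
    using compose_at[OF P_deriv[of ?z] _ vu_deriv[OF PD[of t x]]] by simp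
  have "(\<lambda>v. snd (snd (D2Q Q (0,0,1) ?z v))) = (\<lambda>h. Deta (t,x,1) (fst h, fst (snd h), 0))"
  proof (rule deriv_transfer[OF D2eta_deriv[OF zD] g2 open_D zD])
    fix y assume "y \<in> D"
    then obtain a b c where y: "y = (a,b,c)" "c \<noteq> 0" by (cases y) (auto simp: D_def)
    show "Deta y (0,0,1) = ?G2 y" unfolding y using Deta_formula[OF y(2), of a b "(0,0,1)"] DQ0[OF PD] by simp
  qed
  from fun_cong[OF this, of v] show ?thesis by simp
qed

lemma D2eta_ei:
  assumes w: "w \<noteq> 0"
  shows "snd (snd (D2Q Q (0,0,\<i>) (t,x,w) v)) = \<i> * Deta (t,x,1) (fst v, fst (snd v), 0)"
proof -
  let ?z = "(t,x,w)"
  have zD: "?z \<in> D" using w by (simp add: D_def)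
  let ?G2 = "\<lambda>y::real\<times>real\<times>complex. \<i> * vu Q (fst y, fst (snd y), 1)"
  have g2: "(?G2 has_derivative (\<lambda>h. \<i> * Deta (t,x,1) (fst h, fst (snd h), 0))) (at ?z)"
    using has_derivative_mult_right[OF compose_at[OF P_deriv[of ?z] _ vu_deriv[OF PD[of t x]]], of \<i>] by simp
  have "(\<lambda>v. snd (snd (D2Q Q (0,0,\<i>) ?z v))) = (\<lambda>h. \<i> * Deta (t,x,1) (fst h, fst (snd h), 0))"
  proof (rule deriv_transfer[OF D2eta_deriv[OF zD] g2 open_D zD])
    fix y assume "y \<in> D"
    then obtain a b c where y: "y = (a,b,c)" "c \<noteq> 0" by (cases y) (auto simp: D_def)
    show "Deta y (0,0,\<i>) = ?G2 y" unfolding y using Deta_formula[OF y(2), of a b "(0,0,\<i>)"] DQ0[OF PD] by simp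
  qed
  from fun_cong[OF this, of v] show ?thesis by simp
qed

lemma D2eta_ex:
  assumes w: "w \<noteq> 0"
  shows "snd (snd (D2Q Q (0,1,0) (t,x,w) v)) = snd (snd v) * Deta (t,x,1) (0,1,0)
     + w * snd (snd (D2Q Q (0,1,0) (t,x,1) (fst v, fst (snd v), 0)))"
proof -
  let ?z = "(t,x,w)"
  have zD: "?z \<in> D" using w by (simp add: D_def)
  let ?L = "\<lambda>y::real\<times>real\<times>complex. Deta (fst y, fst (snd y), 1) (0,1,0)"
  have g2: "(?L has_derivative (\<lambda>h. snd (snd (D2Q Q (0,1,0) (t,x,1) (fst h, fst (snd h), 0))))) (at ?z)"
    using compose_at[OF P_deriv[of ?z] _ D2eta_deriv[OF PD[of t x]]] by simp
  have g3: "((\<lambda>y::real\<times>real\<times>complex. snd (snd y)) has_derivative (\<lambda>h. snd (snd h))) (at ?z)"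
    by (auto intro!: derivative_eq_intros)
  have G: "((\<lambda>y. snd (snd y) * ?L y) has_derivative
      (\<lambda>h. snd (snd ?z) * snd (snd (D2Q Q (0,1,0) (t,x,1) (fst h, fst (snd h), 0))) + snd (snd h) * ?L ?z)) (at ?z)"
    by (rule has_derivative_mult[OF g3 g2])
  have "(\<lambda>v. snd (snd (D2Q Q (0,1,0) ?z v))) =
      (\<lambda>h. snd (snd ?z) * snd (snd (D2Q Q (0,1,0) (t,x,1) (fst h, fst (snd h), 0))) + snd (snd h) * ?L ?z)"
  proof (rule deriv_transfer[OF D2eta_deriv[OF zD] G open_D zD])
    fix y assume "y \<in> D"
    then obtain a b c where y: "y = (a,b,c)" "c \<noteq> 0" by (cases y) (auto simp: D_def)
    show "Deta y (0,1,0) = snd (snd y) * ?L y" unfolding y using Deta_formula[OF y(2), of a b "(0,1,0)"] by simp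
  qed
  from fun_cong[OF this, of v] show ?thesis by (simp add: add.commute)
qed

abbreviation "S1 t \<equiv> Dxi (t,0,1) (1,0,0)"

lemma XX_b0:
  assumes w: "w \<noteq> 0"
  shows "XX Q (t,x,w) b 0 = 2 * b * Deta (t,x,1) (0,1,0) + w * snd (snd (D2Q Q (0,1,0) (t,x,1) (0,1,0)))"
proof -
  have "XX Q (t,x,w) b 0 = b * Deta (t,x,1) (0,1,0) + w * snd (snd (D2Q Q (0,1,0) (t,x,1) (0,1,0)))
      + (Re b *\<^sub>R Deta (t,x,1) (0,1,0) + Im b *\<^sub>R (\<i> * Deta (t,x,1) (0,1,0)))"
    unfolding XX_def D2eta_ex[OF w] D2eta_e1[OF w] D2eta_ei[OF w] D2xi_zero[OF w] Dxi_e_zero[OF w]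
    by simp
  also have "\<dots> = 2 * b * Deta (t,x,1) (0,1,0) + w * snd (snd (D2Q Q (0,1,0) (t,x,1) (0,1,0)))"
    unfolding re_im_comb by simp
  finally show ?thesis .
qed

lemma TT_a:
  assumes w: "w \<noteq> 0"
  shows "TT Q (t,x,w) a b = a * vu Q (t,x,1) + w * Deta (t,x,1) (1,0,0) - of_real (S1 t) * b"
  unfolding TT_def using Deta_formula[OF w, of t x "(1,0,a)"] Dxi_formula[OF w, of t x "(1,0,a)"] by simp

lemma eqb:
  assumes w: "w \<noteq> 0"
  shows "\<i> * ((\<i> * (of_real (cmod w powr \<gamma>) * w)) * vu Q (t,x,1) + w * Deta (t,x,1) (1,0,0) - of_real (S1 t) * b)
     + (2 * b * Deta (t,x,1) (0,1,0) + w * snd (snd (D2Q Q (0,1,0) (t,x,1) (0,1,0))))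
     + Fd \<gamma> w (w * vu Q (t,x,1)) = 0"
  using ceq[OF w, of t x 0 0 b] unfolding TT_a[OF w] XX_b0[OF w] eta_hom[OF w] by simp

lemma Lf_val: "Deta (t,x,1) (0,1,0) = \<i> * of_real (S1 t) / 2"
proof -
  have e1: "\<i> * ((\<i> * (of_real (cmod 1 powr \<gamma>) * 1)) * vu Q (t,x,1) + 1 * Deta (t,x,1) (1,0,0) - of_real (S1 t) * 1)
     + (2 * 1 * Deta (t,x,1) (0,1,0) + 1 * snd (snd (D2Q Q (0,1,0) (t,x,1) (0,1,0))))
     + Fd \<gamma> 1 (1 * vu Q (t,x,1)) = 0" by (rule eqb) simp
  have e0: "\<i> * ((\<i> * (of_real (cmod 1 powr \<gamma>) * 1)) * vu Q (t,x,1) + 1 * Deta (t,x,1) (1,0,0) - of_real (S1 t) * 0)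
     + (2 * 0 * Deta (t,x,1) (0,1,0) + 1 * snd (snd (D2Q Q (0,1,0) (t,x,1) (0,1,0))))
     + Fd \<gamma> 1 (1 * vu Q (t,x,1)) = 0" by (rule eqb) simp
  have "2 * Deta (t,x,1) (0,1,0) - \<i> * of_real (S1 t) =
     (\<i> * ((\<i> * (of_real (cmod 1 powr \<gamma>) * 1)) * vu Q (t,x,1) + 1 * Deta (t,x,1) (1,0,0) - of_real (S1 t) * 1)
     + (2 * 1 * Deta (t,x,1) (0,1,0) + 1 * snd (snd (D2Q Q (0,1,0) (t,x,1) (0,1,0))))
     + Fd \<gamma> 1 (1 * vu Q (t,x,1))) -
     (\<i> * ((\<i> * (of_real (cmod 1 powr \<gamma>) * 1)) * vu Q (t,x,1) + 1 * Deta (t,x,1) (1,0,0) - of_real (S1 t) * 0)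
     + (2 * 0 * Deta (t,x,1) (0,1,0) + 1 * snd (snd (D2Q Q (0,1,0) (t,x,1) (0,1,0))))
     + Fd \<gamma> 1 (1 * vu Q (t,x,1)))"
    by (simp add: algebra_simps)
  also have "\<dots> = 0" unfolding e1 e0 by simp
  finally show ?thesis by (simp add: field_simps)
qed

end


lemma Fd1: "Fd \<gamma> 1 K = K + of_real (\<gamma> * Re K)"
  by (simp add: Fd_def)

lemma Fd2: "Fd \<gamma> 2 (2 * K) = 2 * of_real (2 powr \<gamma>) * K + 2 * of_real (2 powr \<gamma> * \<gamma> * Re K)"
proof -
  have s: "sgn (2::complex) = 1" by (simp add: sgn_div_norm scaleR_conv_of_real)
  have i: "inner (2 * K) (1::complex) = 2 * Re K" by simp
  show ?thesis unfolding Fd_def s i by (simp add: algebra_simps)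
qed

context fwd begin

lemma Lx_zero: "snd (snd (D2Q Q (0,1,0) (t,x,1) (0,1,0))) = 0"
proof -
  let ?z = "(t,x,1::complex)"
  have zD: "?z \<in> D" by (rule PD)
  let ?H = "\<lambda>y::real\<times>real\<times>complex. \<i> * of_real (Dxi (fst y, 0, 1) (1,0,0)) / 2"
  have h0: "((\<lambda>y::real\<times>real\<times>complex. Dxi (fst y, 0, 1) (1,0,0)) has_derivative
      (\<lambda>h. fst (snd (D2Q Q (1,0,0) (t,0,1) (fst h, 0, 0))))) (at ?z)"
    using compose_at[OF P2_deriv[of ?z] _ D2xi_deriv[OF PD[of t 0]]] by simp
  have h1: "(?H has_derivative (\<lambda>h. \<i> * of_real (fst (snd (D2Q Q (1,0,0) (t,0,1) (fst h, 0, 0)))) / 2)) (at ?z)"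
    using has_derivative_divide'[OF has_derivative_mult_right[OF has_derivative_of_real[OF h0], of \<i>] has_derivative_const, of 2]
    by simp
  have g3: "((\<lambda>y::real\<times>real\<times>complex. snd (snd y)) has_derivative (\<lambda>h. snd (snd h))) (at ?z)"
    by (auto intro!: derivative_eq_intros)
  have G: "((\<lambda>y. snd (snd y) * ?H y) has_derivative
      (\<lambda>h. snd (snd ?z) * (\<i> * of_real (fst (snd (D2Q Q (1,0,0) (t,0,1) (fst h, 0, 0)))) / 2) + snd (snd h) * ?H ?z)) (at ?z)"
    by (rule has_derivative_mult[OF g3 h1])
  have "(\<lambda>v. snd (snd (D2Q Q (0,1,0) ?z v))) =
      (\<lambda>h. snd (snd ?z) * (\<i> * of_real (fst (snd (D2Q Q (1,0,0) (t,0,1) (fst h, 0, 0)))) / 2) + snd (snd h) * ?H ?z)"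
  proof (rule deriv_transfer[OF D2eta_deriv[OF zD] G open_D zD])
    fix y assume "y \<in> D"
    then obtain a b c where y: "y = (a,b,c)" "c \<noteq> 0" by (cases y) (auto simp: D_def)
    show "Deta y (0,1,0) = snd (snd y) * ?H y" unfolding y using Deta_formula[OF y(2), of a b "(0,1,0)"] Lf_val[of a b]
      by simp
  qed
  from fun_cong[OF this, of "(0,1,0)"] show ?thesis using D2Q0[OF PD[of t 0]] by simp
qed

lemma eq1: "\<i> * Deta (t,x,1) (1,0,0) + of_real (\<gamma> * Re (vu Q (t,x,1))) = 0"
proof -
  have "\<i> * ((\<i> * (of_real (cmod 1 powr \<gamma>) * 1)) * vu Q (t,x,1) + 1 * Deta (t,x,1) (1,0,0) - of_real (S1 t) * 0)
     + (2 * 0 * Deta (t,x,1) (0,1,0) + 1 * snd (snd (D2Q Q (0,1,0) (t,x,1) (0,1,0))))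
     + Fd \<gamma> 1 (1 * vu Q (t,x,1)) = 0" by (rule eqb) simp
  then show ?thesis unfolding Lx_zero by (simp add: Fd1 algebra_simps)
qed

lemma eq2: "\<i> * Deta (t,x,1) (1,0,0) + of_real (2 powr \<gamma> * \<gamma> * Re (vu Q (t,x,1))) = 0"
proof -
  have "\<i> * ((\<i> * (of_real (cmod 2 powr \<gamma>) * 2)) * vu Q (t,x,1) + 2 * Deta (t,x,1) (1,0,0) - of_real (S1 t) * 0)
     + (2 * 0 * Deta (t,x,1) (0,1,0) + 2 * snd (snd (D2Q Q (0,1,0) (t,x,1) (0,1,0))))
     + Fd \<gamma> 2 (2 * vu Q (t,x,1)) = 0" by (rule eqb) simp
  then have "2 * (\<i> * Deta (t,x,1) (1,0,0) + of_real (2 powr \<gamma> * \<gamma> * Re (vu Q (t,x,1)))) = 0"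
    unfolding Lx_zero Fd2 by (simp add: algebra_simps)
  then have "(2::complex) = 0 \<or> \<i> * Deta (t,x,1) (1,0,0) + of_real (2 powr \<gamma> * \<gamma> * Re (vu Q (t,x,1))) = 0"
    by (simp only: mult_eq_0_iff)
  moreover have "(2::complex) \<noteq> 0" by simp
  ultimately show ?thesis by (elim disjE) auto
qed

lemma ReK:
  assumes g: "\<gamma> \<noteq> 0"
  shows "Re (vu Q (t,x,1)) = 0" and "Deta (t,x,1) (1,0,0) = 0"
proof -
  have "(of_real (\<gamma> * Re (vu Q (t,x,1))) - of_real (2 powr \<gamma> * \<gamma> * Re (vu Q (t,x,1))) :: complex)
     = (\<i> * Deta (t,x,1) (1,0,0) + of_real (\<gamma> * Re (vu Q (t,x,1))))
     - (\<i> * Deta (t,x,1) (1,0,0) + of_real (2 powr \<gamma> * \<gamma> * Re (vu Q (t,x,1))))"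
    by algebra
  also have "\<dots> = 0" unfolding eq1 eq2 by simp
  finally have "(of_real (\<gamma> * Re (vu Q (t,x,1)) - 2 powr \<gamma> * \<gamma> * Re (vu Q (t,x,1))) :: complex) = 0"
    by (simp only: of_real_diff)
  then have r: "\<gamma> * Re (vu Q (t,x,1)) = 2 powr \<gamma> * \<gamma> * Re (vu Q (t,x,1))" by (simp only: of_real_eq_0_iff right_minus_eq)
  have p: "2 powr \<gamma> \<noteq> 1" using g by simp
  from r have "\<gamma> * Re (vu Q (t,x,1)) * (2 powr \<gamma> - 1) = 0" by (simp add: algebra_simps)
  then show re: "Re (vu Q (t,x,1)) = 0" using g p by simp
  show "Deta (t,x,1) (1,0,0) = 0" using eq1[of t x] unfolding re by simp
qed

end


context fwd begin

lemma DQ_scale: "z \<in> D \<Longrightarrow> DQ Q z (h *\<^sub>R v) = h *\<^sub>R DQ Q z v"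
  by (rule linear_scale[OF DQ_linear[OF sm]])

lemma k_t:
  assumes g: "\<gamma> \<noteq> 0"
  shows "vu Q (t,x,1) = vu Q (0,x,1)"
proof -
  have "vu Q (t,x,1) = vu Q (0,x,1) + t *\<^sub>R 0"
  proof (rule const_1d[where f="\<lambda>s. vu Q (s,x,1)"])
    fix s :: real
    have l: "((\<lambda>s. (s, x, 1::complex)) has_derivative (\<lambda>h. (h, 0, 0))) (at s)"
      by (auto intro!: derivative_eq_intros simp: zero_prod_def)
    have d1: "((\<lambda>s. vu Q (s,x,1)) has_derivative (\<lambda>h. Deta (s,x,1) (h,0,0))) (at s)"
      using compose_at[OF l _ vu_deriv[OF PD[of s x]]] by simp
    have "Deta (s,x,1) (h,0,0) = 0" for h
    proof -
      have "DQ Q (s,x,1) (h *\<^sub>R (1,0,0)) = h *\<^sub>R DQ Q (s,x,1) (1,0,0)" by (rule DQ_scale[OF PD])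
      then have "Deta (s,x,1) (h,0,0) = h *\<^sub>R Deta (s,x,1) (1,0,0)" by simp
      then show ?thesis using ReK(2)[OF g, of s x] by simp
    qed
    then show "((\<lambda>s. vu Q (s,x,1)) has_derivative (\<lambda>h. h *\<^sub>R 0)) (at s)" using d1 by simp
  qed
  then show ?thesis by simp
qed

lemma k_x:
  shows "vu Q (t,x,1) = vu Q (t,0,1) + x *\<^sub>R (\<i> * of_real (S1 t) / 2)"
proof (rule const_1d[where f="\<lambda>s. vu Q (t,s,1)"])
  fix s :: real
  have l: "((\<lambda>s. (t, s, 1::complex)) has_derivative (\<lambda>h. (0, h, 0))) (at s)"
    by (auto intro!: derivative_eq_intros)
  have d1: "((\<lambda>s. vu Q (t,s,1)) has_derivative (\<lambda>h. Deta (t,s,1) (0,h,0))) (at s)"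
    using compose_at[OF l _ vu_deriv[OF PD[of t s]]] by simp
  have "Deta (t,s,1) (0,h,0) = h *\<^sub>R (\<i> * of_real (S1 t) / 2)" for h
  proof -
    have "DQ Q (t,s,1) (h *\<^sub>R (0,1,0)) = h *\<^sub>R DQ Q (t,s,1) (0,1,0)" by (rule DQ_scale[OF PD])
    then have "Deta (t,s,1) (0,h,0) = h *\<^sub>R Deta (t,s,1) (0,1,0)" by simp
    then show ?thesis using Lf_val[of t s] by simp
  qed
  then show "((\<lambda>s. vu Q (t,s,1)) has_derivative (\<lambda>h. h *\<^sub>R (\<i> * of_real (S1 t) / 2))) (at s)" using d1 by simp
qed

lemma S1_const:
  assumes g: "\<gamma> \<noteq> 0"
  shows "S1 t = S1 0"
proof -
  have a: "vu Q (t,1,1) - vu Q (t,0,1) = \<i> * of_real (S1 t) / 2" using k_x[of t 1] by simp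
  have b: "vu Q (0,1,1) - vu Q (0,0,1) = \<i> * of_real (S1 0) / 2" using k_x[of 0 1] by simp
  have "\<i> * of_real (S1 t) / 2 = \<i> * (of_real (S1 0) :: complex) / 2"
    using a b k_t[OF g, of t 1] k_t[OF g, of t 0] by simp
  then show ?thesis by simp
qed

lemma sigma_lin:
  assumes g: "\<gamma> \<noteq> 0"
  shows "vx Q (t,0,1) = vx Q (0,0,1) + t * S1 0"
proof -
  have "vx Q (t,0,1) = vx Q (0,0,1) + t *\<^sub>R S1 0"
  proof (rule const_1d[where f="\<lambda>s. vx Q (s,0,1)"])
    fix s :: real
    have l: "((\<lambda>s. (s, 0::real, 1::complex)) has_derivative (\<lambda>h. (h, 0, 0))) (at s)"
      by (auto intro!: derivative_eq_intros simp: zero_prod_def)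
    have d1: "((\<lambda>s. vx Q (s,0,1)) has_derivative (\<lambda>h. Dxi (s,0,1) (h,0,0))) (at s)"
      using compose_at[OF l _ vx_deriv[OF PD[of s 0]]] by simp
    have "Dxi (s,0,1) (h,0,0) = h *\<^sub>R S1 0" for h
    proof -
      have "DQ Q (s,0,1) (h *\<^sub>R (1,0,0)) = h *\<^sub>R DQ Q (s,0,1) (1,0,0)" by (rule DQ_scale[OF PD])
      then have "Dxi (s,0,1) (h,0,0) = h *\<^sub>R S1 s" by simp
      then show ?thesis using S1_const[OF g, of s] by simp
    qed
    then show "((\<lambda>s. vx Q (s,0,1)) has_derivative (\<lambda>h. h *\<^sub>R S1 0)) (at s)" using d1 by simp
  qed
  then show ?thesis by simp
qed

lemma Q_form:
  assumes g: "\<gamma> \<noteq> 0" and w: "w \<noteq> 0"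
  shows "Q (t,x,w) = (0, vx Q (0,0,1) + t * S1 0,
            w * (\<i> * of_real (Im (vu Q (0,0,1))) + \<i> * of_real (x * S1 0 / 2)))"
proof -
  have zD: "(t,x,w) \<in> D" using w by (simp add: D_def)
  have 1: "vt Q (t,x,w) = 0" using tau0 zD by blast
  have 2: "vx Q (t,x,w) = vx Q (0,0,1) + t * S1 0"
    using xi_fun[OF w, of t x] sigma_lin[OF g, of t] by simp
  have k00: "vu Q (0,0,1) = \<i> * of_real (Im (vu Q (0,0,1)))"
    using ReK(1)[OF g, of 0 0] by (simp add: complex_eq_iff)
  have 3: "vu Q (t,x,w) = w * (\<i> * of_real (Im (vu Q (0,0,1))) + \<i> * of_real (x * S1 0 / 2))"
  proof -
    have "vu Q (t,x,w) = w * vu Q (t,x,1)" by (rule eta_hom[OF w])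
    also have "vu Q (t,x,1) = vu Q (t,0,1) + x *\<^sub>R (\<i> * of_real (S1 t) / 2)" by (rule k_x)
    also have "vu Q (t,0,1) = vu Q (0,0,1)" by (rule k_t[OF g])
    also have "S1 t = S1 0" by (rule S1_const[OF g])
    finally show ?thesis by (subst (asm) k00) (simp add: scaleR_conv_of_real algebra_simps)
  qed
  have "Q (t,x,w) = (vt Q (t,x,w), vx Q (t,x,w), vu Q (t,x,w))" by (simp add: vt_def vx_def vu_def)
  then show ?thesis unfolding 1 2 3 .
qed

end


lemma mvt_scalar:
  fixes \<psi> :: "real \<Rightarrow> 'b::real_normed_vector"
  assumes d: "\<And>s. s \<in> {0..h} \<Longrightarrow> (\<psi> has_derivative (\<lambda>k. k *\<^sub>R dd s)) (at s)"
    and b: "\<And>s. s \<in> {0..h} \<Longrightarrow> norm (dd s) \<le> B" and h: "0 \<le> h"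
  shows "norm (\<psi> h - \<psi> 0) \<le> B * h"
proof -
  have "norm (\<psi> h - \<psi> 0) \<le> B * norm (h - 0)"
  proof (rule differentiable_bound[where f'="\<lambda>s k. k *\<^sub>R dd s"])
    show "convex {0..h}" by (rule convex_real_interval)
    fix x assume x: "x \<in> {0..h}"
    show "(\<psi> has_derivative (\<lambda>k. k *\<^sub>R dd x)) (at x within {0..h})"
      by (rule has_derivative_at_withinI[OF d[OF x]])
    show "onorm (\<lambda>k. k *\<^sub>R dd x) \<le> B"
    proof (rule onorm_le)
      fix k :: real
      have "norm (k *\<^sub>R dd x) = \<bar>k\<bar> * norm (dd x)" by simp
      also have "\<dots> \<le> \<bar>k\<bar> * B" by (rule mult_left_mono[OF b[OF x]]) simp
      finally show "norm (k *\<^sub>R dd x) \<le> B * norm k" by (simp add: mult.commute)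
    qed
  qed (use h in auto)
  then show ?thesis using h by simp
qed

lemma norm_pair_le: "norm ((a::real), (b::real)) \<le> \<bar>a\<bar> + \<bar>b\<bar>"
proof -
  have "norm (a, b) = sqrt (a\<^sup>2 + b\<^sup>2)" by (simp add: norm_prod_def)
  also have "\<dots> \<le> sqrt (a\<^sup>2) + sqrt (b\<^sup>2)" by (rule sqrt_add_le_add_sqrt) simp_all
  finally show ?thesis by simp
qed

lemma schwarz_half:
  fixes f :: "real \<times> real \<Rightarrow> 'b::real_normed_vector"
  assumes fd: "\<And>q. (f has_derivative Df q) (at q)"
    and dA: "((\<lambda>q. Df q e1) has_derivative DA) (at p)"
    and n1: "norm e1 = 1" and n2: "norm e2 = 1" and e: "e > 0"
  shows "\<exists>\<delta>>0. \<forall>h. 0 < h \<and> h < \<delta> \<longrightarrow>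
     norm (f (p + h *\<^sub>R e1 + h *\<^sub>R e2) - f (p + h *\<^sub>R e1) - f (p + h *\<^sub>R e2) + f p - (h * h) *\<^sub>R DA e2) \<le> 3 * e * (h * h)"
proof -
  let ?A = "\<lambda>q. Df q e1"
  have blA: "bounded_linear DA" using dA by (rule has_derivative_bounded_linear)
  obtain d where d: "d > 0" and dd: "\<And>y. norm (y - p) < d \<Longrightarrow> norm (?A y - ?A p - DA (y - p)) \<le> e * norm (y - p)"
    using dA e unfolding has_derivative_at_alt by blast
  have lin: "\<And>q. linear (Df q)" using fd has_derivative_linear by blast
  show ?thesis
  proof (intro exI[of _ "d/2"] conjI allI impI)
    show "d / 2 > 0" using d by simp
    fix h :: real assume hh: "0 < h \<and> h < d / 2"
    then have h0: "0 < h" and hd: "h < d / 2" by auto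
    define \<psi> where "\<psi> s = f (p + s *\<^sub>R e1 + h *\<^sub>R e2) - f (p + s *\<^sub>R e1) - s *\<^sub>R (h *\<^sub>R DA e2)" for s
    define dd' where "dd' s = ?A (p + s *\<^sub>R e1 + h *\<^sub>R e2) - ?A (p + s *\<^sub>R e1) - h *\<^sub>R DA e2" for s
    have "norm (\<psi> h - \<psi> 0) \<le> (3 * e * h) * h"
    proof (rule mvt_scalar)
      fix s assume s: "s \<in> {0..h}"
      have l1: "((\<lambda>s. p + s *\<^sub>R e1 + h *\<^sub>R e2) has_derivative (\<lambda>k. k *\<^sub>R e1)) (at s)"
        by (auto intro!: derivative_eq_intros)
      have l2: "((\<lambda>s. p + s *\<^sub>R e1) has_derivative (\<lambda>k. k *\<^sub>R e1)) (at s)"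
        by (auto intro!: derivative_eq_intros)
      have c1: "((\<lambda>s. f (p + s *\<^sub>R e1 + h *\<^sub>R e2)) has_derivative (\<lambda>k. Df (p + s *\<^sub>R e1 + h *\<^sub>R e2) (k *\<^sub>R e1))) (at s)"
        by (rule has_derivative_compose[OF l1 fd])
      have c2: "((\<lambda>s. f (p + s *\<^sub>R e1)) has_derivative (\<lambda>k. Df (p + s *\<^sub>R e1) (k *\<^sub>R e1))) (at s)"
        by (rule has_derivative_compose[OF l2 fd])
      have c3: "((\<lambda>s. s *\<^sub>R (h *\<^sub>R DA e2)) has_derivative (\<lambda>k. k *\<^sub>R (h *\<^sub>R DA e2))) (at s)"
        by (rule has_derivative_scaleR_left[OF has_derivative_ident])
      have "(\<psi> has_derivative (\<lambda>k. Df (p + s *\<^sub>R e1 + h *\<^sub>R e2) (k *\<^sub>R e1) - Df (p + s *\<^sub>R e1) (k *\<^sub>R e1) - k *\<^sub>R (h *\<^sub>R DA e2))) (at s)"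
        unfolding \<psi>_def[abs_def] by (rule has_derivative_diff[OF has_derivative_diff[OF c1 c2] c3])
      moreover have "(\<lambda>k. Df (p + s *\<^sub>R e1 + h *\<^sub>R e2) (k *\<^sub>R e1) - Df (p + s *\<^sub>R e1) (k *\<^sub>R e1) - k *\<^sub>R (h *\<^sub>R DA e2)) = (\<lambda>k. k *\<^sub>R dd' s)"
        unfolding dd'_def by (simp add: fun_eq_iff linear_scale[OF lin] scaleR_diff_right)
      ultimately show "(\<psi> has_derivative (\<lambda>k. k *\<^sub>R dd' s)) (at s)" by simp
    next
      fix s assume s: "s \<in> {0..h}"
      then have s0: "0 \<le> s" and sh: "s \<le> h" by auto
      let ?y1 = "p + s *\<^sub>R e1 + h *\<^sub>R e2" and ?y2 = "p + s *\<^sub>R e1"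
      have ny1: "norm (?y1 - p) \<le> 2 * h"
      proof -
        have "norm (?y1 - p) = norm (s *\<^sub>R e1 + h *\<^sub>R e2)" by (simp add: algebra_simps)
        also have "\<dots> \<le> norm (s *\<^sub>R e1) + norm (h *\<^sub>R e2)" by (rule norm_triangle_ineq)
        also have "\<dots> = s + h" using n1 n2 s0 h0 by simp
        finally show ?thesis using sh by simp
      qed
      have ny2: "norm (?y2 - p) \<le> h" using n1 s0 sh by simp
      have b1: "norm (?A ?y1 - ?A p - DA (?y1 - p)) \<le> e * norm (?y1 - p)" by (rule dd) (use ny1 hd in simp)
      have b2: "norm (?A ?y2 - ?A p - DA (?y2 - p)) \<le> e * norm (?y2 - p)" by (rule dd) (use ny2 hd d in simp)
      have lineq: "DA (?y1 - p) - DA (?y2 - p) = h *\<^sub>R DA e2"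
      proof -
        have "?y1 - p = (?y2 - p) + h *\<^sub>R e2" by (simp add: algebra_simps)
        then show ?thesis by (simp add: linear_add[OF bounded_linear.linear[OF blA]] linear_scale[OF bounded_linear.linear[OF blA]])
      qed
      have "dd' s = (?A ?y1 - ?A p - DA (?y1 - p)) - (?A ?y2 - ?A p - DA (?y2 - p))"
        unfolding dd'_def using lineq by (simp add: algebra_simps)
      then have "norm (dd' s) \<le> norm (?A ?y1 - ?A p - DA (?y1 - p)) + norm (?A ?y2 - ?A p - DA (?y2 - p))"
        by (simp only:) (rule norm_triangle_ineq4)
      also have "\<dots> \<le> e * (2 * h) + e * h"
        using b1 b2 mult_left_mono[OF ny1, of e] mult_left_mono[OF ny2, of e] e by linarith
      finally show "norm (dd' s) \<le> 3 * e * h" by simp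
    qed (use h0 in simp)
    moreover have "\<psi> h - \<psi> 0 = f (p + h *\<^sub>R e1 + h *\<^sub>R e2) - f (p + h *\<^sub>R e1) - f (p + h *\<^sub>R e2) + f p - (h * h) *\<^sub>R DA e2"
      unfolding \<psi>_def by (simp add: algebra_simps)
    ultimately show "norm (f (p + h *\<^sub>R e1 + h *\<^sub>R e2) - f (p + h *\<^sub>R e1) - f (p + h *\<^sub>R e2) + f p - (h * h) *\<^sub>R DA e2) \<le> 3 * e * (h * h)"
      by (simp add: algebra_simps)
  qed
qed

lemma schwarz:
  fixes f :: "real \<times> real \<Rightarrow> 'b::real_normed_vector"
  assumes fd: "\<And>q. (f has_derivative Df q) (at q)"
    and dA: "((\<lambda>q. Df q (1,0)) has_derivative DA) (at p)"
    and dB: "((\<lambda>q. Df q (0,1)) has_derivative DB) (at p)"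
  shows "DA (0,1) = DB (1,0)"
proof (rule ccontr)
  assume ne: "DA (0,1) \<noteq> DB (1,0)"
  define e where "e = norm (DA (0,1) - DB (1,0)) / 12"
  have e: "e > 0" using ne by (simp add: e_def)
  obtain d1 where d1: "d1 > 0" and h1: "\<And>h. 0 < h \<and> h < d1 \<Longrightarrow>
     norm (f (p + h *\<^sub>R (1,0) + h *\<^sub>R (0,1)) - f (p + h *\<^sub>R (1,0)) - f (p + h *\<^sub>R (0,1)) + f p - (h * h) *\<^sub>R DA (0,1)) \<le> 3 * e * (h * h)"
    using schwarz_half[OF fd dA _ _ e, of "(0,1)"] by (auto simp: norm_prod_def)
  obtain d2 where d2: "d2 > 0" and h2: "\<And>h. 0 < h \<and> h < d2 \<Longrightarrow>
     norm (f (p + h *\<^sub>R (0,1) + h *\<^sub>R (1,0)) - f (p + h *\<^sub>R (0,1)) - f (p + h *\<^sub>R (1,0)) + f p - (h * h) *\<^sub>R DB (1,0)) \<le> 3 * e * (h * h)"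
    using schwarz_half[OF fd dB _ _ e, of "(1,0)"] by (auto simp: norm_prod_def)
  define h where "h = min d1 d2 / 2"
  have h0: "0 < h" and hd1: "h < d1" and hd2: "h < d2" using d1 d2 by (auto simp: h_def)
  define \<Delta> where "\<Delta> = f (p + h *\<^sub>R (1,0) + h *\<^sub>R (0,1)) - f (p + h *\<^sub>R (1,0)) - f (p + h *\<^sub>R (0,1)) + f p"
  have a1: "norm (\<Delta> - (h * h) *\<^sub>R DA (0,1)) \<le> 3 * e * (h * h)" using h1[of h] h0 hd1 unfolding \<Delta>_def by simp
  have sw: "p + h *\<^sub>R (0,1) + h *\<^sub>R (1,0) = p + h *\<^sub>R (1,0) + h *\<^sub>R ((0::real),(1::real))" by (simp add: algebra_simps)
  have a2: "norm (\<Delta> - (h * h) *\<^sub>R DB (1,0)) \<le> 3 * e * (h * h)"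
    using h2[of h] h0 hd2 unfolding \<Delta>_def sw by (simp add: algebra_simps)
  have "norm ((h * h) *\<^sub>R (DA (0,1) - DB (1,0))) = norm ((\<Delta> - (h * h) *\<^sub>R DB (1,0)) - (\<Delta> - (h * h) *\<^sub>R DA (0,1)))"
    by (simp add: algebra_simps)
  also have "\<dots> \<le> norm (\<Delta> - (h * h) *\<^sub>R DB (1,0)) + norm (\<Delta> - (h * h) *\<^sub>R DA (0,1))"
    by (rule norm_triangle_ineq4)
  also have "\<dots> \<le> 6 * e * (h * h)" using a1 a2 by simp
  finally have n: "norm ((h * h) *\<^sub>R (DA (0,1) - DB (1,0))) \<le> 6 * e * (h * h)" .
  have hh: "0 < h * h" using h0 by simp
  have "norm ((h * h) *\<^sub>R (DA (0,1) - DB (1,0))) = (h * h) * norm (DA (0,1) - DB (1,0))" using h0 by simp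
  then have "(h * h) * norm (DA (0,1) - DB (1,0)) \<le> (h * h) * (6 * e)" using n by (simp only: mult.commute)
  then have "norm (DA (0,1) - DB (1,0)) \<le> 6 * e" using hh by (simp only: mult_le_cancel_left_pos)
  then show False using e unfolding e_def by simp
qed


lemma deriv_const1: "deriv (\<lambda>_::real. (1::real)) t = 0"
  by (rule DERIV_imp_deriv) (rule DERIV_const)

lemma deriv_id1: "deriv (\<lambda>t::real. t) t = 1"
  by (rule DERIV_imp_deriv) (rule DERIV_ident)

lemma rhs_val: "c1 *\<^sub>R M_vf (t,x,w) + c2 *\<^sub>R G_vf (\<lambda>_. 1) (t,x,w) + c3 *\<^sub>R G_vf (\<lambda>t. t) (t,x,w)
   = (0, c2 + c3 * t, \<i> * of_real (c1 + (c3 / 2) * x) * w)"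
  by (simp add: M_vf_def G_vf_def deriv_const1 deriv_id1 scaleR_conv_of_real algebra_simps)

locale bwd =
  fixes Q :: vfield and c1 c2 c3 :: real and u :: "real \<times> real \<Rightarrow> complex" and t0 x0 :: real
  assumes sm: "smooth_on D Q"
    and form: "\<forall>z\<in>D. Q z = c1 *\<^sub>R M_vf z + c2 *\<^sub>R G_vf (\<lambda>_. 1) z + c3 *\<^sub>R G_vf (\<lambda>t. t) z"
    and us: "smooth_on UNIV u" and wnz: "u (t0,x0) \<noteq> 0"
begin

abbreviation "p \<equiv> (t0, x0)"
abbreviation "w \<equiv> u (t0, x0)"
definition "N = {q. u q \<noteq> 0}"

lemma Qval: "z \<in> D \<Longrightarrow> Q z = (0, c2 + c3 * fst z, \<i> * of_real (c1 + (c3 / 2) * fst (snd z)) * snd (snd z))"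
  using form rhs_val by (cases z) auto

definition "Du q = frechet_derivative u (at q)"

lemma du: "(u has_derivative Du q) (at q)"
  unfolding Du_def using smooth_diff[OF us] frechet_derivative_works by blast

lemma sm_ux: "smooth_on UNIV (pdx u)"
  unfolding pdx_def[abs_def] by (rule smooth_deriv[OF us])

lemma sm_ut: "smooth_on UNIV (pdt u)"
  unfolding pdt_def[abs_def] by (rule smooth_deriv[OF us])

lemma sm_uxx: "smooth_on UNIV (pdx (pdx u))"
  unfolding pdx_def[of "pdx u", abs_def] by (rule smooth_deriv[OF sm_ux])

lemma dgen: "smooth_on UNIV g \<Longrightarrow> (g has_derivative frechet_derivative g (at q)) (at q)"
  using smooth_diff frechet_derivative_works by blast

lemma openN: "open N"
proof -
  have "N = u -` (- {0})" by (auto simp: N_def)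
  then show ?thesis
    by (simp only:) (rule continuous_open_vimage[OF open_Compl[OF closed_singleton]], rule has_derivative_continuous[OF du])
qed

lemma pN: "p \<in> N" using wnz by (simp add: N_def)

definition "C q = \<i> * of_real (c1 + (c3 / 2) * snd q) * u q - of_real (c2 + c3 * fst q) * pdx u q"

lemma charQ_C: "q \<in> N \<Longrightarrow> charQ Q u q = C q"
proof -
  assume q: "q \<in> N"
  then have "pt u q \<in> D" by (simp add: N_def pt_in_D)
  then show ?thesis unfolding charQ_def C_def vt_def vx_def vu_def Qval[OF \<open>pt u q \<in> D\<close>]
    by (simp add: pt_def)
qed

lemma dC: "(C has_derivative (\<lambda>h. \<i> * of_real ((c3 / 2) * snd h) * u q + \<i> * of_real (c1 + (c3 / 2) * snd q) * Du q h
     - (of_real (c3 * fst h) * pdx u q + of_real (c2 + c3 * fst q) * frechet_derivative (pdx u) (at q) h))) (at q)"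
  unfolding C_def[abs_def]
  apply (rule has_derivative_eq_rhs)
   apply (rule derivative_eq_intros du dgen[OF sm_ux] refl)+
  by (simp add: fun_eq_iff algebra_simps)

lemma pdt_C: "pdt (charQ Q u) p = \<i> * of_real (c1 + (c3 / 2) * x0) * pdt u p
     - (of_real c3 * pdx u p + of_real (c2 + c3 * t0) * pdt (pdx u) p)"
proof -
  have "pdt (charQ Q u) p = pdt C p"
    unfolding pdt_def using fd_local[OF openN pN, of "charQ Q u" C] charQ_C by simp
  also have "\<dots> = \<i> * of_real (c1 + (c3 / 2) * x0) * pdt u p
     - (of_real c3 * pdx u p + of_real (c2 + c3 * t0) * pdt (pdx u) p)"
    using fun_cong[OF frechet_derivative_at[OF dC[of p]], of "(1,0)", symmetric]
    unfolding pdt_def[of C] pdt_def[of u] pdt_def[of "pdx u"] Du_def by simp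
  finally show ?thesis .
qed

definition "C2 q = \<i> * of_real (c3 / 2) * u q + \<i> * of_real (c1 + (c3 / 2) * snd q) * pdx u q
   - of_real (c2 + c3 * fst q) * pdx (pdx u) q"

lemma pdx_C: "q \<in> N \<Longrightarrow> pdx (charQ Q u) q = C2 q"
proof -
  assume q: "q \<in> N"
  have "pdx (charQ Q u) q = pdx C q"
    unfolding pdx_def using fd_local[OF openN q, of "charQ Q u" C] charQ_C by simp
  also have "\<dots> = C2 q"
    using fun_cong[OF frechet_derivative_at[OF dC[of q]], of "(0,1)", symmetric]
    unfolding pdx_def[of C] C2_def pdx_def[of u] pdx_def[of "pdx u"] Du_def by simp
  finally show ?thesis .
qed

lemma dC2: "(C2 has_derivative (\<lambda>h. \<i> * of_real (c3 / 2) * Du p h + (\<i> * of_real ((c3 / 2) * snd h) * pdx u p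
     + \<i> * of_real (c1 + (c3 / 2) * x0) * frechet_derivative (pdx u) (at p) h)
     - (of_real (c3 * fst h) * pdx (pdx u) p + of_real (c2 + c3 * t0) * frechet_derivative (pdx (pdx u)) (at p) h))) (at p)"
  unfolding C2_def[abs_def]
  apply (rule has_derivative_eq_rhs)
   apply (rule derivative_eq_intros du dgen[OF sm_ux] dgen[OF sm_uxx] refl)+
  by (simp add: fun_eq_iff algebra_simps)

lemma pdxx_C: "pdx (pdx (charQ Q u)) p = \<i> * of_real c3 * pdx u p + \<i> * of_real (c1 + (c3 / 2) * x0) * pdx (pdx u) p
     - of_real (c2 + c3 * t0) * pdx (pdx (pdx u)) p"
proof -
  have "frechet_derivative (pdx (charQ Q u)) (at p) = frechet_derivative C2 (at p)"
    by (rule fd_local[OF openN pN]) (simp add: pdx_C)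
  then have "pdx (pdx (charQ Q u)) p = pdx C2 p" unfolding pdx_def[of "pdx (charQ Q u)" p] pdx_def[of C2 p] by simp
  also have "\<dots> = \<i> * of_real c3 * pdx u p + \<i> * of_real (c1 + (c3 / 2) * x0) * pdx (pdx u) p
     - of_real (c2 + c3 * t0) * pdx (pdx (pdx u)) p"
    using fun_cong[OF frechet_derivative_at[OF dC2], of "(0,1)", symmetric]
    unfolding pdx_def[of C2] pdx_def[of u] pdx_def[of "pdx u"] pdx_def[of "pdx (pdx u)"] Du_def
    by (simp add: algebra_simps)
  finally show ?thesis .
qed

lemma mixed: "pdt (pdx u) p = pdx (pdt u) p"
proof -
  have "frechet_derivative (pdt u) (at p) (0,1) = frechet_derivative (pdx u) (at p) (1,0)"
  proof (rule schwarz[where Df=Du])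
    show "\<And>q. (u has_derivative Du q) (at q)" by (rule du)
    show "((\<lambda>q. Du q (1,0)) has_derivative frechet_derivative (pdt u) (at p)) (at p)"
      using dgen[OF sm_ut] unfolding pdt_def[abs_def] Du_def .
    show "((\<lambda>q. Du q (0,1)) has_derivative frechet_derivative (pdx u) (at p)) (at p)"
      using dgen[OF sm_ux] unfolding pdx_def[abs_def] Du_def .
  qed
  then show ?thesis unfolding pdt_def[of "pdx u"] pdx_def[of "pdt u"] by simp
qed

end


lemma Fd_rot: "Fd \<gamma> w (\<i> * of_real \<theta> * w) = \<i> * of_real \<theta> * of_real (cmod w powr \<gamma>) * w"
proof -
  have "inner (\<i> * of_real \<theta> * w) (sgn w) = 0"
    by (simp add: inner_complex_def sgn_div_norm algebra_simps)
  then show ?thesis by (simp add: Fd_def algebra_simps)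
qed

context bwd begin

lemma crit_zero:
  assumes Vs: "smooth_on UNIV V" and eq: "NLS \<gamma> V (jet u p) = 0"
  shows "frechet_derivative (NLS \<gamma> V) (at (jet u p)) (prQ Q u p) = 0"
proof -
  have dV: "(V has_derivative frechet_derivative V (at t0)) (at t0)" by (rule dgen[OF Vs])
  have lV: "linear (frechet_derivative V (at t0))" using dV has_derivative_linear by blast
  have zD: "pt u p \<in> D" using wnz by (simp add: pt_in_D)
  have Qz: "Q (pt u p) = (0, c2 + c3 * t0, \<i> * of_real (c1 + (c3 / 2) * x0) * w)"
    using Qval[OF zD] by (simp add: pt_def)
  have j: "jet u p = (t0, x0, w, pdt u p, pdx (pdx u) p)" by (simp add: jet_def)
  have et: "eta_t Q u p = \<i> * of_real (c1 + (c3 / 2) * x0) * pdt u p - of_real c3 * pdx u p"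
    unfolding eta_t_def vt_def vx_def Qz pdt_C mixed by (simp add: algebra_simps)
  have exx: "eta_xx Q u p = \<i> * of_real c3 * pdx u p + \<i> * of_real (c1 + (c3 / 2) * x0) * pdx (pdx u) p"
    unfolding eta_xx_def vt_def vx_def Qz pdxx_C by (simp add: algebra_simps)
  have pr: "prQ Q u p = (0, c2 + c3 * t0, \<i> * of_real (c1 + (c3 / 2) * x0) * w, eta_t Q u p, eta_xx Q u p)"
    unfolding prQ_def vt_def vx_def vu_def Qz by simp
  have n: "\<i> * pdt u p + pdx (pdx u) p + of_real (cmod w powr \<gamma>) * w + V t0 * w = 0"
    using eq unfolding j NLS_def by simp
  have "frechet_derivative (NLS \<gamma> V) (at (jet u p)) (prQ Q u p) =
     \<i> * (\<i> * of_real (c1 + (c3 / 2) * x0) * pdt u p - of_real c3 * pdx u p)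
     + (\<i> * of_real c3 * pdx u p + \<i> * of_real (c1 + (c3 / 2) * x0) * pdx (pdx u) p)
     + \<i> * of_real (c1 + (c3 / 2) * x0) * of_real (cmod w powr \<gamma>) * w
     + frechet_derivative V (at t0) 0 * w + V t0 * (\<i> * of_real (c1 + (c3 / 2) * x0) * w)"
    unfolding j pr NLS_fd[OF dV wnz] et exx Fd_rot by simp
  also have "\<dots> = \<i> * of_real (c1 + (c3 / 2) * x0) * (\<i> * pdt u p + pdx (pdx u) p + of_real (cmod w powr \<gamma>) * w + V t0 * w)"
    using linear_0[OF lV] by (simp add: algebra_simps)
  also have "\<dots> = 0" unfolding n by simp
  finally show ?thesis .
qed

end


theorem lemma2:
  fixes \<gamma> :: real
  assumes "\<gamma> \<noteq> 0"
  shows "\<forall>Q. Q \<in> (\<Inter>V \<in> {V :: real \<Rightarrow> complex. smooth_on UNIV V}. max_inv_alg \<gamma> V) \<longleftrightarrow>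
           smooth_on D Q \<and>
           (\<exists>c1 c2 c3 :: real. \<forall>z\<in>D.
              Q z = c1 *\<^sub>R M_vf z + c2 *\<^sub>R G_vf (\<lambda>_. 1) z + c3 *\<^sub>R G_vf (\<lambda>t. t) z)"
proof (intro allI iffI)
  fix Q
  assume "Q \<in> (\<Inter>V \<in> {V :: real \<Rightarrow> complex. smooth_on UNIV V}. max_inv_alg \<gamma> V)"
  then have lie: "\<And>V. smooth_on UNIV V \<Longrightarrow> lie_sym \<gamma> V Q" by (simp add: max_inv_alg_def)
  have sm: "smooth_on D Q" using lie[OF smooth_const[of UNIV "0::complex"]] by (simp add: lie_sym_def)
  have tau0: "\<forall>z\<in>D. vt Q z = 0" using tau_zero[OF lie] by blast
  have lc: "\<And>V0::complex. lie_sym \<gamma> (\<lambda>_. V0) Q" by (rule lie[OF smooth_const])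
  interpret fwd Q \<gamma> using sm tau0 lc by unfold_locales
  show "smooth_on D Q \<and> (\<exists>c1 c2 c3 :: real. \<forall>z\<in>D.
              Q z = c1 *\<^sub>R M_vf z + c2 *\<^sub>R G_vf (\<lambda>_. 1) z + c3 *\<^sub>R G_vf (\<lambda>t. t) z)"
  proof (intro conjI exI ballI)
    show "smooth_on D Q" by (rule sm)
    fix z assume z: "z \<in> D"
    then obtain t x w where zz: "z = (t,x,w)" and w: "w \<noteq> 0" by (cases z) (auto simp: D_def)
    show "Q z = Im (vu Q (0,0,1)) *\<^sub>R M_vf z + vx Q (0,0,1) *\<^sub>R G_vf (\<lambda>_. 1) z + S1 0 *\<^sub>R G_vf (\<lambda>t. t) z"
      unfolding zz rhs_val Q_form[OF assms w] by (simp add: algebra_simps)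
  qed
next
  fix Q
  assume "smooth_on D Q \<and> (\<exists>c1 c2 c3 :: real. \<forall>z\<in>D.
              Q z = c1 *\<^sub>R M_vf z + c2 *\<^sub>R G_vf (\<lambda>_. 1) z + c3 *\<^sub>R G_vf (\<lambda>t. t) z)"
  then obtain c1 c2 c3 where sm: "smooth_on D Q"
    and form: "\<forall>z\<in>D. Q z = c1 *\<^sub>R M_vf z + c2 *\<^sub>R G_vf (\<lambda>_. 1) z + c3 *\<^sub>R G_vf (\<lambda>t. t) z" by blast
  have "lie_sym \<gamma> V Q" if Vs: "smooth_on UNIV V" for V
    unfolding lie_sym_def
  proof (intro conjI allI impI)
    show "smooth_on D Q" by (rule sm)
    fix u :: "real \<times> real \<Rightarrow> complex" and p :: "real \<times> real"
    assume us: "smooth_on UNIV u" and up: "u p \<noteq> 0" and eq: "NLS \<gamma> V (jet u p) = 0"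
    obtain t0 x0 where pp: "p = (t0, x0)" by (cases p)
    interpret bwd Q c1 c2 c3 u t0 x0 using sm form us up pp by unfold_locales auto
    show "frechet_derivative (NLS \<gamma> V) (at (jet u p)) (prQ Q u p) = 0"
      using crit_zero[OF Vs] eq unfolding pp by blast
  qed
  then show "Q \<in> (\<Inter>V \<in> {V :: real \<Rightarrow> complex. smooth_on UNIV V}. max_inv_alg \<gamma> V)"
    by (simp add: max_inv_alg_def)
qed


end
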